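(* Let $X$ be a $0$-dimensional space. Then the dual group of $C_p(X,\mathbb Z)\otimes_{\mathcal Q}\mathbb T$ is isomorphic to the free abelian group $A(X)$: $(C_p(X,\mathbb Z)\otimes_{\mathcal Q}\mathbb T)^{\wedge}\simeq A(X)$.
   Context: Spaces are Tikhonov; $0$-dimensional means having a base of clopen sets. $C_p(X,\mathbb Z)$ is the group of continuous functions $X\to\mathbb Z$ ($\mathbb Z$ discrete) with the topology of pointwise convergence; $A(X)$ is the free abelian group on $X$. $\mathbb T=\mathbb R/\mathbb Z$; the dual $\widehat L$ (also written $L^{\wedge}$) is the group of continuous homomorphisms $L\to\mathbb T$. A subset $A$ of a topological abelian group $L$ is quasi-convex if for every $g\notin A$ there is a continuous character $\chi$ with $|\chi(a)|\le1/4$ on $A$ and $|\chi(g)|>1/4$; $\mathcal Q$ is the class of Hausdorff abelian groups with a basis at $0$ of quasi-convex sets. A continuous bihomomorphism is separately a continuous homomorphism in each variable and continuous at $(0,0)$. For $G_1,G_2\in\mathcal Q$, $G_1\otimes_{\mathcal Q}G_2$ is the group in $\mathcal Q$ with a continuous bihomomorphism $\otimes_{\mathcal Q}:G_1\times G_2\to G_1\otimes_{\mathcal Q}G_2$ through which every continuous bihomomorphism into a group of $\mathcal Q$ factors via a unique continuous homomorphism (unique up to topological isomorphism). *)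

theory Defs
  imports "HOL-Analysis.Analysis" "HOL-Algebra.Algebra"
begin

definition top_ab_group :: "'g monoid \<Rightarrow> 'g topology \<Rightarrow> bool" where
  "top_ab_group G \<tau> \<longleftrightarrow> comm_group G \<and> topspace \<tau> = carrier G \<and>
     continuous_map (prod_topology \<tau> \<tau>) \<tau> (\<lambda>(x,y). x \<otimes>\<^bsub>G\<^esub> y) \<and>
     continuous_map \<tau> \<tau> (\<lambda>x. inv\<^bsub>G\<^esub> x)"

section \<open>The circle group T = R/Z, represented on [0,1) with addition mod 1\<close>

definition T_grp :: "real monoid" where
  "T_grp = \<lparr>carrier = {x. 0 \<le> x \<and> x < 1}, mult = (\<lambda>x y. frac (x + y)), one = 0\<rparr>"

text \<open>Quotient topology of R -> R/Z.\<close>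
definition T_top :: "real topology" where
  "T_top = topology (\<lambda>U. U \<subseteq> {x. 0 \<le> x \<and> x < 1} \<and> open {x. frac x \<in> U})"

definition T_abs :: "real \<Rightarrow> real" where
  "T_abs t = min (frac t) (1 - frac t)"

definition characters :: "'g monoid \<Rightarrow> 'g topology \<Rightarrow> ('g \<Rightarrow> real) set" where
  "characters G \<tau> = {chi. chi \<in> hom G T_grp \<and> continuous_map \<tau> T_top chi}"

definition quasi_convex :: "'g monoid \<Rightarrow> 'g topology \<Rightarrow> 'g set \<Rightarrow> bool" where
  "quasi_convex G \<tau> A \<longleftrightarrow> A \<subseteq> carrier G \<and>
     (\<forall>g \<in> carrier G - A. \<exists>chi \<in> characters G \<tau>.
        (\<forall>a\<in>A. T_abs (chi a) \<le> 1/4) \<and> T_abs (chi g) > 1/4)"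

definition nbhd_of_one :: "'g monoid \<Rightarrow> 'g topology \<Rightarrow> 'g set \<Rightarrow> bool" where
  "nbhd_of_one G \<tau> V \<longleftrightarrow> (\<exists>U. openin \<tau> U \<and> \<one>\<^bsub>G\<^esub> \<in> U \<and> U \<subseteq> V)"

definition in_Q :: "'g monoid \<Rightarrow> 'g topology \<Rightarrow> bool" where
  "in_Q G \<tau> \<longleftrightarrow> top_ab_group G \<tau> \<and> Hausdorff_space \<tau> \<and>
     (\<forall>W. nbhd_of_one G \<tau> W \<longrightarrow>
        (\<exists>V. nbhd_of_one G \<tau> V \<and> quasi_convex G \<tau> V \<and> V \<subseteq> W))"

definition cont_bihom :: "'g1 monoid \<Rightarrow> 'g1 topology \<Rightarrow> 'g2 monoid \<Rightarrow> 'g2 topology \<Rightarrow>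
     'h monoid \<Rightarrow> 'h topology \<Rightarrow> ('g1 \<Rightarrow> 'g2 \<Rightarrow> 'h) \<Rightarrow> bool" where
  "cont_bihom G1 \<tau>1 G2 \<tau>2 H \<tau>H b \<longleftrightarrow>
     (\<forall>x \<in> carrier G1. (\<lambda>y. b x y) \<in> hom G2 H \<and> continuous_map \<tau>2 \<tau>H (\<lambda>y. b x y)) \<and>
     (\<forall>y \<in> carrier G2. (\<lambda>x. b x y) \<in> hom G1 H \<and> continuous_map \<tau>1 \<tau>H (\<lambda>x. b x y)) \<and>
     (\<forall>W. openin \<tau>H W \<and> \<one>\<^bsub>H\<^esub> \<in> W \<longrightarrow>
        (\<exists>U V. openin \<tau>1 U \<and> \<one>\<^bsub>G1\<^esub> \<in> U \<and> openin \<tau>2 V \<and> \<one>\<^bsub>G2\<^esub> \<in> V \<and>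
               (\<forall>x\<in>U. \<forall>y\<in>V. b x y \<in> W)))"

text \<open>Universal property of (P, tau_P, t) as G1 \<otimes>_Q G2, tested against all
  targets H in Q whose carrier lives in the type 'h.\<close>
definition Q_tensor_universal ::
  "'h itself \<Rightarrow> 'g1 monoid \<Rightarrow> 'g1 topology \<Rightarrow> 'g2 monoid \<Rightarrow> 'g2 topology \<Rightarrow>
   'p monoid \<Rightarrow> 'p topology \<Rightarrow> ('g1 \<Rightarrow> 'g2 \<Rightarrow> 'p) \<Rightarrow> bool" where
  "Q_tensor_universal (_::'h itself) G1 \<tau>1 G2 \<tau>2 P \<tau>P t \<longleftrightarrow>
     (\<forall>(H::'h monoid) \<tau>H b. in_Q H \<tau>H \<and> cont_bihom G1 \<tau>1 G2 \<tau>2 H \<tau>H b \<longrightarrow>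
        (\<exists>f. f \<in> hom P H \<and> continuous_map \<tau>P \<tau>H f \<and>
             (\<forall>x\<in>carrier G1. \<forall>y\<in>carrier G2. b x y = f (t x y)) \<and>
             (\<forall>g. g \<in> hom P H \<and> continuous_map \<tau>P \<tau>H g \<and>
                  (\<forall>x\<in>carrier G1. \<forall>y\<in>carrier G2. b x y = g (t x y))
                  \<longrightarrow> (\<forall>z\<in>carrier P. g z = f z))))"

definition Cp_Z :: "'a topology \<Rightarrow> ('a \<Rightarrow> int) monoid" where
  "Cp_Z XX = \<lparr>carrier = {f. f \<in> extensional (topspace XX) \<and>
                           continuous_map XX (discrete_topology (UNIV::int set)) f},
             mult = (\<lambda>f g. restrict (\<lambda>x. f x + g x) (topspace XX)),
             one = restrict (\<lambda>x. 0) (topspace XX)\<rparr>"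

definition Cp_Z_top :: "'a topology \<Rightarrow> ('a \<Rightarrow> int) topology" where
  "Cp_Z_top XX = subtopology (product_topology (\<lambda>_. discrete_topology (UNIV::int set)) (topspace XX))
                            (carrier (Cp_Z XX))"

definition zero_dimensional :: "'a topology \<Rightarrow> bool" where
  "zero_dimensional XX \<longleftrightarrow>
     (\<forall>U x. openin XX U \<and> x \<in> U \<longrightarrow> (\<exists>V. openin XX V \<and> closedin XX V \<and> x \<in> V \<and> V \<subseteq> U))"

definition tychonoff_space :: "'a topology \<Rightarrow> bool" where
  "tychonoff_space XX \<longleftrightarrow> completely_regular_space XX \<and> Hausdorff_space XX"

definition dual_group :: "'g monoid \<Rightarrow> 'g topology \<Rightarrow> ('g \<Rightarrow> real) monoid" where
  "dual_group G \<tau> = \<lparr>carrier = {chi. chi \<in> characters G \<tau> \<and> chi \<in> extensional (carrier G)},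
                     mult = (\<lambda>chi psi. restrict (\<lambda>z. frac (chi z + psi z)) (carrier G)),
                     one = restrict (\<lambda>z. 0) (carrier G)\<rparr>"

end

theory Submission
  imports Defs
begin


lemma frac_half_notint: "frac x \<ge> 1/2 \<Longrightarrow> x \<notin> \<int>" 
proof
  assume "frac x \<ge> 1/2" "x \<in> \<int>"
  then have "frac x = 0" by simp
  with \<open>frac x \<ge> 1/2\<close> show False by simp
qed

lemma T_abs_round: "T_abs x = \<bar>x - of_int (round x)\<bar>"
proof (cases "frac x \<ge> 1/2")
  case True
  then have "x \<notin> \<int>" by (rule frac_half_notint)
  then have "x \<noteq> of_int (floor x)" by (metis Ints_of_int)
  then have c: "ceiling x = floor x + 1" by (simp add: ceiling_altdef)
  have r: "round x = ceiling x" unfolding round_altdef using True by simp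
  show ?thesis using True unfolding T_abs_def r c frac_def by simp
next
  case False
  have r: "round x = floor x" unfolding round_altdef using False by simp
  show ?thesis using False unfolding T_abs_def r frac_def by simp
qed

lemma T_abs_le_int: "T_abs x \<le> \<bar>x - of_int m\<bar>"
  unfolding T_abs_round by (rule round_diff_minimal)

lemma T_abs_nonneg: "T_abs x \<ge> 0" by (simp add: T_abs_round)
lemma T_abs_le_abs: "T_abs x \<le> \<bar>x\<bar>" using T_abs_le_int[of x 0] by simp
lemma T_abs_half: "T_abs x \<le> 1/2" unfolding T_abs_round
  using of_int_round_ge[of x] of_int_round_le[of x] by linarith
lemma T_abs_small: assumes "\<bar>x\<bar> < 1/2" shows "T_abs x = \<bar>x\<bar>"
proof -
  have "round x = 0" using assms by (intro round_unique') simp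
  then show ?thesis by (simp add: T_abs_round)
qed
lemma T_abs_shift[simp]: "T_abs (x + of_int m) = T_abs x" by (simp add: T_abs_def)
lemma T_abs_shift'[simp]: "T_abs (of_int m + x) = T_abs x" by (simp add: T_abs_def)
lemma T_abs_frac[simp]: "T_abs (frac x) = T_abs x" by (simp add: T_abs_def)
lemma T_abs_neg[simp]: "T_abs (- x) = T_abs x"
proof -
  have "T_abs (-x) \<le> \<bar>-x - of_int (- round x)\<bar>" by (rule T_abs_le_int)
  moreover have "T_abs x \<le> \<bar>x - of_int (- round (-x))\<bar>" by (rule T_abs_le_int)
  ultimately show ?thesis unfolding T_abs_round by simp
qed
lemma T_abs_triangle: "T_abs (x + y) \<le> T_abs x + T_abs y"
proof -
  have "T_abs (x+y) \<le> \<bar>x + y - of_int (round x + round y)\<bar>" by (rule T_abs_le_int)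
  then show ?thesis by (simp add: T_abs_round)
qed
lemma T_abs_mult: "T_abs (of_nat j * x) \<le> of_nat j * T_abs x"
proof (induction j)
  case 0 then show ?case by (simp add: T_abs_def)
next
  case (Suc j)
  have "T_abs (of_nat (Suc j) * x) = T_abs (of_nat j * x + x)" by (simp add: algebra_simps)
  also have "\<dots> \<le> T_abs (of_nat j * x) + T_abs x" by (rule T_abs_triangle)
  finally show ?case using Suc by (simp add: algebra_simps)
qed
lemma T_abs_zero_iff: "T_abs x = 0 \<longleftrightarrow> x \<in> \<int>"
proof
  assume "T_abs x = 0"
  then have "x = of_int (round x)" unfolding T_abs_round by simp
  then show "x \<in> \<int>" by (metis Ints_of_int)
next
  assume "x \<in> \<int>"
  then obtain m where "x = of_int m" by (auto elim: Ints_cases)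
  then show "T_abs x = 0" by (simp add: T_abs_round)
qed

lemma T_abs_witness:
  assumes "\<And>j::nat. j \<ge> 1 \<Longrightarrow> T_abs (of_nat j * y) < 1/4"
  shows "y \<in> \<int>"
proof (rule ccontr)
  assume ny: "y \<notin> \<int>"
  define z where "z = y - of_int (round y)"
  define s where "s = \<bar>z\<bar>"
  have s: "s = T_abs y" by (simp add: s_def z_def T_abs_round)
  have s0: "s > 0" using ny s T_abs_zero_iff T_abs_nonneg by (metis order_le_less)
  have s2: "s \<le> 1/2" using s T_abs_half by simp
  define k where "k = nat (floor (1/(4 * s))) + 1"
  have k1: "k \<ge> 1" by (simp add: k_def)
  have fl0: "floor (1/(4 * s)) \<ge> 0" using s0 by simp
  have rk: "real k = of_int (floor (1/(4 * s))) + 1" unfolding k_def using fl0 by simp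
  have a: "real k * s > 1/4"
  proof -
    have "real k > 1/(4 * s)" unfolding rk by linarith
    then have "1 < real k * (4 * s)" using s0 by (simp add: divide_less_eq)
    then show ?thesis by simp
  qed
  have b: "real k * s < 3/4"
  proof (cases "s < 1/2")
    case True
    have "real k \<le> 1/(4 * s) + 1" unfolding rk by linarith
    then have "real k * s \<le> (1/(4 * s) + 1) * s" using s0 by (simp add: mult_right_mono)
    also have "\<dots> = 1/4 + s" using s0 by (simp add: field_simps)
    finally show ?thesis using True by simp
  next
    case False
    then have "s = 1/2" using s2 by simp
    then have "k = 1" unfolding k_def by simp
    then show ?thesis using \<open>s = 1/2\<close> by simp
  qed
  have "T_abs (of_nat k * y) = T_abs (of_nat k * z)"
  proof -
    have "of_nat k * y = of_nat k * z + of_int (int k * round y)" by (simp add: z_def algebra_simps)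
    then have "T_abs (of_nat k * y) = T_abs (of_nat k * z + of_int (int k * round y))" by (rule arg_cong)
    then show ?thesis by (simp only: T_abs_shift)
  qed
  also have "\<dots> = T_abs (real k * s)"
  proof (cases "z \<ge> 0")
    case True then show ?thesis by (simp add: s_def)
  next
    case False
    then have "real k * z = - (real k * s)" by (simp add: s_def)
    then show ?thesis by simp
  qed
  also have "\<dots> = min (real k * s) (1 - real k * s)"
    unfolding T_abs_def using a b by (subst frac_eq_id) auto
  finally have "T_abs (of_nat k * y) > 1/4" using a b by simp
  with assms[OF k1] show False by simp
qed



lemma istopology_T: "istopology (\<lambda>U. U \<subseteq> {x::real. 0 \<le> x \<and> x < 1} \<and> open {x. frac x \<in> U})"
proof -
  have 1: "\<And>S T::real set. open {x. frac x \<in> S} \<Longrightarrow> open {x. frac x \<in> T} \<Longrightarrow> open {x. frac x \<in> S \<inter> T}"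
  proof -
    fix S T :: "real set"
    assume "open {x. frac x \<in> S}" "open {x. frac x \<in> T}"
    moreover have "{x. frac x \<in> S \<inter> T} = {x. frac x \<in> S} \<inter> {x. frac x \<in> T}" by auto
    ultimately show "open {x. frac x \<in> S \<inter> T}" by auto
  qed
  have 2: "\<And>K::real set set. (\<forall>S\<in>K. open {x. frac x \<in> S}) \<Longrightarrow> open {x. frac x \<in> \<Union>K}"
  proof -
    fix K :: "real set set"
    assume K: "\<forall>S\<in>K. open {x. frac x \<in> S}"
    have "{x. frac x \<in> \<Union>K} = (\<Union>S\<in>K. {x. frac x \<in> S})" by auto
    then show "open {x. frac x \<in> \<Union>K}" using K by auto
  qed
  show ?thesis unfolding istopology_def using 1 2 by blast
qed

lemma openin_T_top: "openin T_top U \<longleftrightarrow> U \<subseteq> {x. 0 \<le> x \<and> x < 1} \<and> open {x. frac x \<in> U}"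
  unfolding T_top_def using istopology_T by simp

lemma topspace_T_top[simp]: "topspace T_top = {x. 0 \<le> x \<and> x < 1}"
proof -
  have "openin T_top {x. 0 \<le> x \<and> x < 1}" unfolding openin_T_top by (simp add: frac_lt_1)
  then have "{x. 0 \<le> x \<and> x < 1} \<subseteq> topspace T_top" by (rule openin_subset)
  moreover have "topspace T_top \<subseteq> {x. 0 \<le> x \<and> x < 1}"
    using openin_T_top[of "topspace T_top"] by simp
  ultimately show ?thesis by blast
qed

lemma carrier_T_grp[simp]: "carrier T_grp = {x. 0 \<le> x \<and> x < 1}" by (simp add: T_grp_def)
lemma mult_T_grp[simp]: "x \<otimes>\<^bsub>T_grp\<^esub> y = frac (x + y)" by (simp add: T_grp_def)
lemma one_T_grp[simp]: "\<one>\<^bsub>T_grp\<^esub> = 0" by (simp add: T_grp_def)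

lemma frac_frac_add: "frac (frac a + frac b) = frac (a + b)"
proof -
  have "frac (a + b) = frac ((frac a + frac b) + of_int (floor a + floor b))"
    by (rule arg_cong[where f=frac]) (simp add: frac_def)
  also have "\<dots> = frac (frac a + frac b)" by (rule frac_add_of_int_right)
  finally show ?thesis by simp
qed

lemma frac_shift_eq: "frac (y - of_int m) = frac y"
proof -
  have "frac y = frac ((y - of_int m) + of_int m)" by simp
  also have "\<dots> = frac (y - of_int m)" by (rule frac_add_of_int_right)
  finally show ?thesis by simp
qed

lemma frac_image_open:
  assumes "open B" shows "openin T_top (frac ` B)"
  unfolding openin_T_top
proof
  show "frac ` B \<subseteq> {x. 0 \<le> x \<and> x < 1}" by (auto simp: frac_lt_1)
  show "open {x. frac x \<in> frac ` B}"
    unfolding open_dist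
  proof (intro ballI)
    fix z assume "z \<in> {x. frac x \<in> frac ` B}"
    then obtain b where b: "b \<in> B" "frac z = frac b" by auto
    define m where "m = floor z - floor b"
    have zb: "z = b + of_int m" using b(2) unfolding m_def frac_def by simp
    obtain e where e: "e > 0" "\<forall>y. dist y b < e \<longrightarrow> y \<in> B"
      using assms b(1) unfolding open_dist by blast
    show "\<exists>e>0. \<forall>y. dist y z < e \<longrightarrow> y \<in> {x. frac x \<in> frac ` B}"
    proof (intro exI conjI allI impI)
      show "e > 0" by (rule e(1))
      fix y assume "dist y z < e"
      then have "dist (y - of_int m) b < e" using zb by (simp add: dist_real_def)
      then have "y - of_int m \<in> B" using e(2) by blast
      moreover have "frac y = frac (y - of_int m)" by (simp only: frac_shift_eq)
      ultimately show "y \<in> {x. frac x \<in> frac ` B}" by auto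
    qed
  qed
qed

lemma T_open_nbhd:
  assumes "openin T_top V" "frac z0 \<in> V"
  obtains e where "e > 0" "\<And>z. \<bar>z - z0\<bar> < e \<Longrightarrow> frac z \<in> V"
proof -
  have "open {x. frac x \<in> V}" using assms(1) openin_T_top by blast
  moreover have "z0 \<in> {x. frac x \<in> V}" using assms(2) by simp
  ultimately obtain e where "e > 0" "\<forall>y. dist y z0 < e \<longrightarrow> y \<in> {x. frac x \<in> V}"
    unfolding open_dist by blast
  then show ?thesis using that by (auto simp: dist_real_def)
qed

lemma frac_ball0:
  fixes r :: real
  assumes "0 < r" "r \<le> 1/2"
  shows "frac ` ball (0::real) r = {s. 0 \<le> s \<and> s < 1 \<and> T_abs s < r}"
proof
  show "frac ` ball (0::real) r \<subseteq> {s. 0 \<le> s \<and> s < 1 \<and> T_abs s < r}"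
  proof
    fix s :: real assume "s \<in> frac ` ball (0::real) r"
    then obtain z where z: "\<bar>z\<bar> < r" "s = frac z" by (auto simp: dist_real_def)
    have "T_abs s = T_abs z" using z by simp
    also have "\<dots> \<le> \<bar>z\<bar>" by (rule T_abs_le_abs)
    finally show "s \<in> {s. 0 \<le> s \<and> s < 1 \<and> T_abs s < r}" using z by (simp add: frac_lt_1)
  qed
next
  show "{s. 0 \<le> s \<and> s < 1 \<and> T_abs s < r} \<subseteq> frac ` ball (0::real) r"
  proof
    fix s assume s: "s \<in> {s. 0 \<le> s \<and> s < 1 \<and> T_abs s < r}"
    define z where "z = s - of_int (round s)"
    have "\<bar>z\<bar> < r" using s unfolding z_def by (simp add: T_abs_round)
    moreover have "frac z = s" using s unfolding z_def frac_shift_eq by (simp add: frac_eq)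
    ultimately show "s \<in> frac ` ball (0::real) r" by (auto simp: dist_real_def intro!: image_eqI[where x=z])
  qed
qed

lemma T_abs_ball_open:
  fixes r :: real
  assumes "0 < r" "r \<le> 1/2"
  shows "openin T_top {s. 0 \<le> s \<and> s < 1 \<and> T_abs s < r}"
  using frac_image_open[of "ball 0 r"] frac_ball0[OF assms] by simp

lemma cont_T_lift:
  assumes "\<And>x. G (frac x) = frac (F x)" "continuous_on UNIV F"
  shows "continuous_map T_top T_top G"
  unfolding continuous_map_def
proof (intro conjI allI impI)
  show "G \<in> topspace T_top \<rightarrow> topspace T_top"
  proof
    fix x assume "x \<in> topspace T_top"
    then have "frac x = x" by (simp add: frac_eq)
    then have "G x = frac (F x)" using assms(1)[of x] by simp
    then show "G x \<in> topspace T_top" by (simp add: frac_lt_1)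
  qed
  fix U assume U: "openin T_top U"
  have "{x. frac x \<in> {x \<in> topspace T_top. G x \<in> U}} = F -` {x. frac x \<in> U}"
    using assms(1) by (auto simp: frac_lt_1)
  moreover have "open (F -` {x. frac x \<in> U})"
    using assms(2) U openin_T_top open_vimage by blast
  ultimately show "openin T_top {x \<in> topspace T_top. G x \<in> U}"
    unfolding openin_T_top by auto
qed

lemma frac_mult_int: "frac (of_int k * frac x) = frac (of_int k * x)"
proof -
  have "of_int k * x = of_int k * frac x + of_int (k * floor x)" by (simp add: frac_def algebra_simps)
  then show ?thesis by (metis frac_add_of_int_right)
qed

lemma cont_char: "continuous_map T_top T_top (\<lambda>t. frac (of_int k * t))"
  by (rule cont_T_lift[where F="\<lambda>x. of_int k * x"]) (simp_all add: frac_mult_int continuous_intros)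

lemma cont_T_neg: "continuous_map T_top T_top (\<lambda>t. frac (- t))"
  by (rule cont_T_lift[where F="\<lambda>x. - x"]) (simp_all add: frac_neg_frac continuous_intros)

lemma cont_T_add: "continuous_map (prod_topology T_top T_top) T_top (\<lambda>(x,y). frac (x + y))"
  unfolding continuous_map_def
proof (intro conjI allI impI)
  show "(\<lambda>(x,y). frac (x + y)) \<in> topspace (prod_topology T_top T_top) \<rightarrow> topspace T_top"
    by (auto simp: frac_lt_1)
  fix W assume W: "openin T_top W"
  show "openin (prod_topology T_top T_top) {p \<in> topspace (prod_topology T_top T_top). (\<lambda>(x,y). frac (x + y)) p \<in> W}"
    unfolding openin_prod_topology_alt
  proof (intro allI impI)
    fix x y assume "(x,y) \<in> {p \<in> topspace (prod_topology T_top T_top). (\<lambda>(x,y). frac (x + y)) p \<in> W}"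
    then have xy: "0 \<le> x" "x < 1" "0 \<le> y" "y < 1" "frac (x + y) \<in> W" by auto
    obtain e where e: "e > 0" "\<And>z. \<bar>z - (x+y)\<bar> < e \<Longrightarrow> frac z \<in> W"
      using T_open_nbhd[OF W xy(5)] by blast
    define U where "U = frac ` ball x (e/2)"
    define V where "V = frac ` ball y (e/2)"
    show "\<exists>U V. openin T_top U \<and> openin T_top V \<and> x \<in> U \<and> y \<in> V \<and>
        U \<times> V \<subseteq> {p \<in> topspace (prod_topology T_top T_top). (\<lambda>(x,y). frac (x + y)) p \<in> W}"
    proof (intro exI conjI)
      show "openin T_top U" "openin T_top V" unfolding U_def V_def by (simp_all add: frac_image_open)
      show "x \<in> U" unfolding U_def using xy e(1) by (auto intro!: image_eqI[where x=x] simp: frac_eq)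
      show "y \<in> V" unfolding V_def using xy e(1) by (auto intro!: image_eqI[where x=y] simp: frac_eq)
      show "U \<times> V \<subseteq> {p \<in> topspace (prod_topology T_top T_top). (\<lambda>(x,y). frac (x + y)) p \<in> W}"
      proof
        fix p assume "p \<in> U \<times> V"
        then obtain a b where ab: "a \<in> ball x (e/2)" "b \<in> ball y (e/2)" "p = (frac a, frac b)"
          unfolding U_def V_def by auto
        then have "\<bar>a - x\<bar> < e/2" "\<bar>b - y\<bar> < e/2" by (auto simp: dist_real_def abs_minus_commute)
        then have "\<bar>(a + b) - (x + y)\<bar> < e" by arith
        then have "frac (a + b) \<in> W" by (rule e(2))
        moreover have "frac (frac a + frac b) = frac (a + b)"
          by (rule frac_frac_add)
        ultimately show "p \<in> {p \<in> topspace (prod_topology T_top T_top). (\<lambda>(x,y). frac (x + y)) p \<in> W}"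
          using ab(3) by (simp add: frac_lt_1)
      qed
    qed
  qed
qed


lemma T_abs_kick:
  assumes s0: "T_abs y > 0"
  shows "\<exists>k::nat. k \<ge> 1 \<and> (real k - 1) * T_abs y \<le> 1/4 \<and> T_abs (of_nat k * y) > 1/4"
proof -
  define z where "z = y - of_int (round y)"
  define s where "s = \<bar>z\<bar>"
  have s: "s = T_abs y" by (simp add: s_def z_def T_abs_round)
  have s0: "s > 0" using s0 s by simp
  have s2: "s \<le> 1/2" using s T_abs_half by simp
  define k where "k = nat (floor (1/(4 * s))) + 1"
  have k1: "k \<ge> 1" by (simp add: k_def)
  have fl0: "floor (1/(4 * s)) \<ge> 0" using s0 by simp
  have rk: "real k = of_int (floor (1/(4 * s))) + 1" unfolding k_def using fl0 by simp
  have c: "(real k - 1) * s \<le> 1/4"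
  proof -
    have "real k - 1 \<le> 1/(4 * s)" unfolding rk by linarith
    then have "(real k - 1) * s \<le> 1/(4 * s) * s" using s0 by (intro mult_right_mono) simp_all
    also have "1/(4 * s) * s = 1/4" using s0 by simp
    finally show ?thesis .
  qed
  have a: "real k * s > 1/4"
  proof -
    have "real k > 1/(4 * s)" unfolding rk by linarith
    then have "1 < real k * (4 * s)" using s0 by (simp add: divide_less_eq)
    then show ?thesis by simp
  qed
  have b: "real k * s < 3/4"
  proof (cases "s < 1/2")
    case True
    have "real k \<le> 1/(4 * s) + 1" unfolding rk by linarith
    then have "real k * s \<le> (1/(4 * s) + 1) * s" using s0 by (simp add: mult_right_mono)
    also have "\<dots> = 1/4 + s" using s0 by (simp add: field_simps)
    finally show ?thesis using True by simp
  next
    case False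
    then have "s = 1/2" using s2 by simp
    then have "k = 1" unfolding k_def by simp
    then show ?thesis using \<open>s = 1/2\<close> by simp
  qed
  have "T_abs (of_nat k * y) = T_abs (of_nat k * z)"
  proof -
    have "of_nat k * y = of_nat k * z + of_int (int k * round y)" by (simp add: z_def algebra_simps)
    then have "T_abs (of_nat k * y) = T_abs (of_nat k * z + of_int (int k * round y))" by (rule arg_cong)
    then show ?thesis by (simp only: T_abs_shift)
  qed
  also have "\<dots> = T_abs (real k * s)"
  proof (cases "z \<ge> 0")
    case True then show ?thesis by (simp add: s_def)
  next
    case False
    then have "real k * z = - (real k * s)" by (simp add: s_def)
    then show ?thesis by simp
  qed
  also have "\<dots> = min (real k * s) (1 - real k * s)"
    unfolding T_abs_def using a b by (subst frac_eq_id) auto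
  finally have "T_abs (of_nat k * y) > 1/4" using a b by simp
  then show ?thesis using k1 c s by blast
qed

lemma T_abs_0[simp]: "T_abs 0 = 0" by (simp add: T_abs_def)

lemma II_frac: "x \<in> {x. 0 \<le> x \<and> x < 1} \<Longrightarrow> frac x = x" by (simp add: frac_eq)

lemma comm_group_T: "comm_group T_grp"
proof (rule comm_groupI)
  fix x y z assume xyz: "x \<in> carrier T_grp" "y \<in> carrier T_grp" "z \<in> carrier T_grp"
  show "x \<otimes>\<^bsub>T_grp\<^esub> y \<in> carrier T_grp" by (simp add: frac_lt_1)
  have "frac (frac (x + y) + z) = frac (x + y + z)"
    using frac_frac_add[of "x+y" z] II_frac[of z] xyz by simp
  moreover have "frac (x + frac (y + z)) = frac (x + (y + z))"
    using frac_frac_add[of x "y+z"] II_frac[of x] xyz by simp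
  ultimately show "x \<otimes>\<^bsub>T_grp\<^esub> y \<otimes>\<^bsub>T_grp\<^esub> z = x \<otimes>\<^bsub>T_grp\<^esub> (y \<otimes>\<^bsub>T_grp\<^esub> z)"
    by (simp add: add.assoc)
  show "x \<otimes>\<^bsub>T_grp\<^esub> y = y \<otimes>\<^bsub>T_grp\<^esub> x" by (simp add: add.commute)
  show "\<one>\<^bsub>T_grp\<^esub> \<otimes>\<^bsub>T_grp\<^esub> x = x" using xyz by (simp add: II_frac)
  have "frac (frac (- x) + x) = 0"
    using frac_frac_add[of "-x" x] II_frac[of x] xyz by simp
  then show "\<exists>y\<in>carrier T_grp. y \<otimes>\<^bsub>T_grp\<^esub> x = \<one>\<^bsub>T_grp\<^esub>"
    by (intro bexI[where x="frac (-x)"]) (simp_all add: frac_lt_1)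
qed (simp)

interpretation Tg: comm_group T_grp by (rule comm_group_T)

lemma inv_T: "x \<in> carrier T_grp \<Longrightarrow> inv\<^bsub>T_grp\<^esub> x = frac (- x)"
proof -
  assume x: "x \<in> carrier T_grp"
  have c: "frac (- x) \<in> carrier T_grp" by (simp add: frac_lt_1)
  have "frac (- x) \<otimes>\<^bsub>T_grp\<^esub> x = frac (frac (- x) + x)" by (rule mult_T_grp)
  also have "\<dots> = frac (- x + x)" by (rule frac_add_simps(1))
  also have "\<dots> = \<one>\<^bsub>T_grp\<^esub>" by simp
  finally show ?thesis using Tg.inv_equality x c by blast
qed

lemma T_pow_nat: "x \<in> carrier T_grp \<Longrightarrow> x [^]\<^bsub>T_grp\<^esub> (n::nat) = frac (of_nat n * x)"
proof (induction n)
  case 0 then show ?case by simp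
next
  case (Suc n)
  have "x [^]\<^bsub>T_grp\<^esub> Suc n = x [^]\<^bsub>T_grp\<^esub> n \<otimes>\<^bsub>T_grp\<^esub> x" by (rule nat_pow_Suc)
  also have "\<dots> = frac (frac (of_nat n * x) + x)" using Suc by (simp only: mult_T_grp)
  also have "\<dots> = frac (of_nat n * x + x)" by (rule frac_add_simps(1))
  also have "of_nat n * x + x = of_nat (Suc n) * x" by (simp add: algebra_simps)
  finally show ?case .
qed

lemma T_pow_int: "x \<in> carrier T_grp \<Longrightarrow> x [^]\<^bsub>T_grp\<^esub> (k::int) = frac (of_int k * x)"
proof (cases "k < 0")
  case True
  assume x: "x \<in> carrier T_grp"
  have "x [^]\<^bsub>T_grp\<^esub> k = inv\<^bsub>T_grp\<^esub> (x [^]\<^bsub>T_grp\<^esub> nat (- k))"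
    using True by (simp only: int_pow_def2 if_True)
  also have "\<dots> = inv\<^bsub>T_grp\<^esub> (frac (of_nat (nat (- k)) * x))" using x by (simp only: T_pow_nat)
  also have "\<dots> = frac (- frac (of_nat (nat (- k)) * x))" by (rule inv_T) (simp add: frac_lt_1)
  also have "\<dots> = frac (- (of_nat (nat (- k)) * x))" by (rule frac_neg_frac)
  also have "- (of_nat (nat (- k)) * x) = of_int k * x" using True by simp
  finally show ?thesis .
next
  case False
  assume x: "x \<in> carrier T_grp"
  have "0 \<le> k" using False by simp
  then obtain n where n: "k = int n" by (rule nonneg_int_cases)
  have "x [^]\<^bsub>T_grp\<^esub> k = x [^]\<^bsub>T_grp\<^esub> n" unfolding n by (rule int_pow_int)
  also have "\<dots> = frac (of_int k * x)" using x n by (simp add: T_pow_nat)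
  finally show ?thesis .
qed
lemma top_ab_group_T: "top_ab_group T_grp T_top"
  unfolding top_ab_group_def
proof (intro conjI)
  show "comm_group T_grp" by (rule comm_group_T)
  show "topspace T_top = carrier T_grp" by simp
  have "(\<lambda>(x,y). x \<otimes>\<^bsub>T_grp\<^esub> y) = (\<lambda>(x,y). frac (x + y))" by simp
  then show "continuous_map (prod_topology T_top T_top) T_top (\<lambda>(x,y). x \<otimes>\<^bsub>T_grp\<^esub> y)"
    using cont_T_add by simp
  show "continuous_map T_top T_top (\<lambda>x. inv\<^bsub>T_grp\<^esub> x)"
    by (rule continuous_map_eq[OF cont_T_neg]) (simp add: inv_T)
qed

lemma Hausdorff_T: "Hausdorff_space T_top"
  unfolding Hausdorff_space_def
proof (intro allI impI)
  fix x y assume xy: "x \<in> topspace T_top \<and> y \<in> topspace T_top \<and> x \<noteq> y"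
  have "x - y \<notin> \<int>"
  proof
    assume "x - y \<in> \<int>"
    then obtain m where m: "x - y = of_int m" by (auto elim: Ints_cases)
    have "\<bar>x - y\<bar> < 1" using xy by auto
    then have "m = 0" using m by simp
    then show False using m xy by simp
  qed
  then have d: "T_abs (x - y) > 0" using T_abs_zero_iff T_abs_nonneg by (metis order_le_less)
  define r where "r = T_abs (x - y) / 2"
  have r0: "r > 0" using d by (simp add: r_def)
  show "\<exists>U V. openin T_top U \<and> openin T_top V \<and> x \<in> U \<and> y \<in> V \<and> disjnt U V"
  proof (intro exI conjI)
    show "openin T_top (frac ` ball x r)" "openin T_top (frac ` ball y r)" by (simp_all add: frac_image_open)
    show "x \<in> frac ` ball x r" using xy r0 by (auto intro!: image_eqI[where x=x] simp: II_frac)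
    show "y \<in> frac ` ball y r" using xy r0 by (auto intro!: image_eqI[where x=y] simp: II_frac)
    show "disjnt (frac ` ball x r) (frac ` ball y r)"
      unfolding disjnt_def
    proof (rule ccontr)
      assume "frac ` ball x r \<inter> frac ` ball y r \<noteq> {}"
      then obtain a b where ab: "a \<in> ball x r" "b \<in> ball y r" "frac a = frac b" by auto
      have "a - b = of_int (floor a - floor b)" using ab(3) unfolding frac_def by simp
      then have tab: "T_abs (a - b) = 0" by (simp add: T_abs_zero_iff)
      have "T_abs (x - y) = T_abs ((x - a) + ((a - b) + (b - y)))" by simp
      also have "\<dots> \<le> T_abs (x - a) + T_abs ((a - b) + (b - y))" by (rule T_abs_triangle)
      also have "\<dots> \<le> T_abs (x - a) + (T_abs (a - b) + T_abs (b - y))"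
        using T_abs_triangle[of "a - b" "b - y"] by simp
      also have "\<dots> \<le> \<bar>x - a\<bar> + \<bar>b - y\<bar>" using tab T_abs_le_abs[of "x-a"] T_abs_le_abs[of "b-y"] by simp
      also have "\<dots> < 2 * r" using ab by (simp add: dist_real_def abs_minus_commute)
      finally show False by (simp add: r_def)
    qed
  qed
qed

lemma char_T_hom: "(\<lambda>t. frac (of_int k * t)) \<in> hom T_grp T_grp"
proof (rule homI)
  fix x y assume "x \<in> carrier T_grp" "y \<in> carrier T_grp"
  have "frac (of_int k * frac (x + y)) = frac (of_int k * (x + y))" by (rule frac_mult_int)
  also have "\<dots> = frac (frac (of_int k * x) + frac (of_int k * y))" by (simp add: frac_frac_add algebra_simps)
  finally show "frac (of_int k * (x \<otimes>\<^bsub>T_grp\<^esub> y)) = frac (of_int k * x) \<otimes>\<^bsub>T_grp\<^esub> frac (of_int k * y)" by simp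
qed (simp add: frac_lt_1)

lemma char_T: "(\<lambda>t. frac (of_int k * t)) \<in> characters T_grp T_top"
  unfolding characters_def using char_T_hom cont_char by blast

lemma in_Q_T: "in_Q T_grp T_top"
  unfolding in_Q_def
proof (intro conjI allI impI)
  show "top_ab_group T_grp T_top" by (rule top_ab_group_T)
  show "Hausdorff_space T_top" by (rule Hausdorff_T)
  fix W assume "nbhd_of_one T_grp T_top W"
  then obtain U where U: "openin T_top U" "0 \<in> U" "U \<subseteq> W" unfolding nbhd_of_one_def by auto
  obtain e where e: "e > 0" "\<And>z. \<bar>z - 0\<bar> < e \<Longrightarrow> frac z \<in> U"
    using T_open_nbhd[OF U(1), of 0] U(2) by auto
  define m where "m = nat (ceiling (1/e)) + 1"
  have m1: "m \<ge> 1" by (simp add: m_def)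
  have ce: "of_int (ceiling (1/e)) \<ge> 1/e" by (rule le_of_int_ceiling)
  have "1/e > 0" using e(1) by simp
  then have "ceiling (1/e) \<ge> 0" using ceiling_mono[of 0 "1/e"] by simp
  then have "real m = of_int (ceiling (1/e)) + 1" unfolding m_def by simp
  then have "real m > 1/e" using ce by linarith
  then have me: "1 / real m < e" using e(1) m1 by (simp add: field_simps)
  define r where "r = 1 / (4 * real m)"
  have r0: "r > 0" using m1 by (simp add: r_def)
  have re: "r < e" using me m1 by (simp add: r_def field_simps)
  have r2: "r \<le> 1/2" using m1 by (simp add: r_def field_simps)
  define V where "V = {t. 0 \<le> t \<and> t < 1 \<and> T_abs t \<le> r}"
  show "\<exists>V. nbhd_of_one T_grp T_top V \<and> quasi_convex T_grp T_top V \<and> V \<subseteq> W"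
  proof (intro exI conjI)
    show "nbhd_of_one T_grp T_top V" unfolding nbhd_of_one_def
      using T_abs_ball_open[OF r0 r2] by (intro exI[where x="{s. 0 \<le> s \<and> s < 1 \<and> T_abs s < r}"])
        (auto simp: V_def r0)
    show "V \<subseteq> W"
    proof
      fix t assume t: "t \<in> V"
      define z where "z = t - of_int (round t)"
      have "\<bar>z - 0\<bar> < e" using t re unfolding V_def z_def T_abs_round by simp
      then have "frac z \<in> U" by (rule e(2))
      moreover have "frac z = t" unfolding z_def frac_shift_eq using t by (simp add: V_def II_frac)
      ultimately show "t \<in> W" using U(3) by auto
    qed
    show "quasi_convex T_grp T_top V"
      unfolding quasi_convex_def
    proof (intro conjI ballI)
      show "V \<subseteq> carrier T_grp" by (auto simp: V_def)
      fix g assume g: "g \<in> carrier T_grp - V"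
      then have gr: "T_abs g > r" by (auto simp: V_def)
      have g0: "T_abs g > 0" using gr r0 by linarith
      obtain k :: nat where k: "k \<ge> 1" "(real k - 1) * T_abs g \<le> 1/4" "T_abs (of_nat k * g) > 1/4"
        using T_abs_kick[OF g0] by blast
      have "(real k - 1) * r < 1/4"
      proof (cases "k = 1")
        case True then show ?thesis by simp
      next
        case False
        then have "real k - 1 > 0" using k(1) by simp
        then have "(real k - 1) * r < (real k - 1) * T_abs g" using gr by simp
        then show ?thesis using k(2) by simp
      qed
      then have "real k - 1 < real m" using m1 by (simp add: r_def field_simps)
      then have "real k < real (m + 1)" by simp
      then have "k < m + 1" by (simp only: of_nat_less_iff)
      then have km: "real k \<le> real m" by simp
      show "\<exists>chi\<in>characters T_grp T_top. (\<forall>a\<in>V. T_abs (chi a) \<le> 1/4) \<and> T_abs (chi g) > 1/4"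
      proof (intro bexI[OF _ char_T[of "int k"]] conjI ballI)
        show "T_abs (frac (of_int (int k) * g)) > 1/4" using k(3) by simp
        fix a assume a: "a \<in> V"
        have "T_abs (frac (of_int (int k) * a)) = T_abs (of_nat k * a)" by simp
        also have "\<dots> \<le> real k * T_abs a" by (rule T_abs_mult)
        also have "\<dots> \<le> real m * r" using a km T_abs_nonneg[of a]
          by (intro mult_mono) (auto simp: V_def)
        also have "\<dots> = 1/4" using m1 by (simp add: r_def)
        finally show "T_abs (frac (of_int (int k) * a)) \<le> 1/4" .
      qed
    qed
  qed
qed

lemma frac_eq_int_diff: "frac a = frac b \<Longrightarrow> a = b + of_int (floor a - floor b)"
  unfolding frac_def by simp

lemma frac_of_int_mult: "frac (of_int k * x) = frac (of_int k * frac x)"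
  by (rule frac_mult_int[symmetric])

lemma int_abs_lt1: "\<bar>(of_int z::real)\<bar> < 1 \<Longrightarrow> z = 0"
proof -
  assume "\<bar>(of_int z::real)\<bar> < 1"
  then have "\<bar>z\<bar> < 1" by (metis of_int_abs of_int_less_1_iff)
  then show "z = 0" by simp
qed

lemma int_small_zero: "x = of_int m \<Longrightarrow> \<bar>x\<bar> < 1 \<Longrightarrow> (x::real) = 0"
  by simp

lemma char_classify:
  assumes hc: "c \<in> hom T_grp T_grp" and cc: "continuous_map T_top T_top c"
  shows "\<exists>n::int. \<forall>t\<in>carrier T_grp. c t = frac (of_int n * t)"
proof -
  have gh: "group_hom T_grp T_grp c"
    unfolding group_hom_def group_hom_axioms_def using Tg.is_group hc by simp
  have c0: "c 0 = 0" using group_hom.hom_one[OF gh] by simp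
  have cI: "\<And>x. x \<in> carrier T_grp \<Longrightarrow> c x \<in> carrier T_grp" using hc by (auto simp: hom_def)
  have cIf: "\<And>z. 0 \<le> c (frac z) \<and> c (frac z) < 1" using cI by (simp add: frac_lt_1)
  have cmul: "\<And>z j. c (frac (of_nat j * z)) = frac (of_nat j * c (frac z))"
  proof -
    fix z :: real and j :: nat
    have fz: "frac z \<in> carrier T_grp" by (simp add: frac_lt_1)
    have "frac (of_nat j * z) = frac (of_int (int j) * z)" by simp
    also have "\<dots> = frac (of_int (int j) * frac z)" by (rule frac_of_int_mult)
    also have "\<dots> = frac z [^]\<^bsub>T_grp\<^esub> j" using T_pow_nat[OF fz] by simp
    finally have "c (frac (of_nat j * z)) = c (frac z [^]\<^bsub>T_grp\<^esub> j)" by simp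
    also have "\<dots> = c (frac z) [^]\<^bsub>T_grp\<^esub> j" using group_hom.hom_nat_pow[OF gh fz] by simp
    also have "\<dots> = frac (of_nat j * c (frac z))" using T_pow_nat cI fz by simp
    finally show "c (frac (of_nat j * z)) = frac (of_nat j * c (frac z))" .
  qed
  have cadd: "\<And>a b. c (frac (a + b)) = frac (c (frac a) + c (frac b))"
  proof -
    fix a b :: real
    have e1: "c (frac a \<otimes>\<^bsub>T_grp\<^esub> frac b) = c (frac a) \<otimes>\<^bsub>T_grp\<^esub> c (frac b)"
      by (rule hom_mult[OF hc]) (simp_all add: frac_lt_1)
    have e2: "frac a \<otimes>\<^bsub>T_grp\<^esub> frac b = frac (a + b)" by simp
    from e1 e2 show "c (frac (a + b)) = frac (c (frac a) + c (frac b))" by simp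
  qed
  have W0: "openin T_top {s. 0 \<le> s \<and> s < 1 \<and> T_abs s < 1/8}" by (rule T_abs_ball_open) simp_all
  have O: "openin T_top {x \<in> topspace T_top. c x \<in> {s. 0 \<le> s \<and> s < 1 \<and> T_abs s < 1/8}}"
    using cc W0 by (rule openin_continuous_map_preimage)
  have Z: "frac 0 \<in> {x \<in> topspace T_top. c x \<in> {s. 0 \<le> s \<and> s < 1 \<and> T_abs s < 1/8}}"
    using c0 by simp
  obtain \<delta> where \<delta>: "\<delta> > 0"
    "\<And>z. \<bar>z - 0\<bar> < \<delta> \<Longrightarrow> frac z \<in> {x \<in> topspace T_top. c x \<in> {s. 0 \<le> s \<and> s < 1 \<and> T_abs s < 1/8}}"
    using T_open_nbhd[OF O Z] by auto
  have small: "\<And>z. \<bar>z\<bar> < \<delta> \<Longrightarrow> T_abs (c (frac z)) < 1/8" using \<delta>(2) by simp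
  obtain N :: nat where N: "N > 0" "inverse (real N) < \<delta>" using ex_inverse_of_nat_less[OF \<delta>(1)] by blast
  define u where "u K = c (frac (1 / (real N * real K)))" for K :: nat
  define l where "l K = u K - of_int (round (u K))" for K :: nat
  have ufr: "frac (l K) = u K" for K
  proof -
    have "frac (l K) = frac (u K)" unfolding l_def by (rule frac_shift_eq)
    also have "\<dots> = u K" using cIf[of "1 / (real N * real K)"] unfolding u_def by (simp add: frac_eq)
    finally show ?thesis .
  qed
  have pl: "frac (of_nat p * l K) = frac (of_nat p * u K)" for p K
  proof -
    have "frac (of_nat p * l K) = frac (of_int (int p) * l K)" by simp
    also have "\<dots> = frac (of_int (int p) * frac (l K))" by (rule frac_of_int_mult)
    finally show ?thesis using ufr by simp
  qed
  have cpu: "c (frac (of_nat p / (real N * real K))) = frac (of_nat p * u K)" for p K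
    using cmul[of p "1 / (real N * real K)"] unfolding u_def by simp
  have lsmall: "\<bar>l K\<bar> < 1/8" if "K \<ge> 1" for K
  proof -
    have "\<bar>1 / (real N * real K)\<bar> \<le> 1 / real N" using N that by (simp add: field_simps)
    also have "\<dots> < \<delta>" using N by (simp add: field_simps)
    finally have "T_abs (u K) < 1/8" unfolding u_def by (rule small)
    then show ?thesis by (simp add: l_def T_abs_round)
  qed
  have A: "\<And>j. j \<le> K \<Longrightarrow> \<bar>of_nat j * l K\<bar> < 1/8" if K1: "K \<ge> 1" for K
  proof -
    fix j show "j \<le> K \<Longrightarrow> \<bar>of_nat j * l K\<bar> < 1/8"
    proof (induction j)
      case 0 then show ?case by simp
    next
      case (Suc j)
      have b1: "\<bar>of_nat j * l K\<bar> < 1/8" using Suc by simp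
      have "\<bar>of_nat (Suc j) * l K\<bar> \<le> \<bar>of_nat j * l K\<bar> + \<bar>l K\<bar>"
        by (simp add: algebra_simps abs_triangle_ineq)
      then have b2: "\<bar>of_nat (Suc j) * l K\<bar> < 1/2" using b1 lsmall[OF K1] by linarith
      have sj: "real (Suc j) \<le> real K" using Suc.prems by simp
      have NK: "real N * real K > 0" using N K1 by simp
      have "of_nat (Suc j) / (real N * real K) \<le> real K / (real N * real K)"
        using sj NK by (intro divide_right_mono) simp_all
      also have "real K / (real N * real K) = 1 / real N" using K1 by simp
      also have "\<dots> < \<delta>" using N by (simp add: field_simps)
      finally have "\<bar>of_nat (Suc j) / (real N * real K)\<bar> < \<delta>" using NK by simp
      then have lt: "T_abs (c (frac (of_nat (Suc j) / (real N * real K)))) < 1/8" by (rule small)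
      have eq: "frac (of_nat (Suc j) * l K) = c (frac (of_nat (Suc j) / (real N * real K)))"
        by (simp only: pl cpu)
      have "T_abs (of_nat (Suc j) * l K) = T_abs (frac (of_nat (Suc j) * l K))" by (rule T_abs_frac[symmetric])
      also have "\<dots> < 1/8" unfolding eq by (rule lt)
      finally show ?case using T_abs_small[OF b2] by simp
    qed
  qed
  have lK: "real K * l K = l 1" if K1: "K \<ge> 1" for K
  proof -
    have "frac (of_nat K * l K) = frac (of_nat K * u K)" by (rule pl)
    also have "\<dots> = c (frac (of_nat K / (real N * real K)))" by (rule cpu[symmetric])
    also have "of_nat K / (real N * real K) = 1 / (real N * real 1)" using K1 by simp
    also have "c (frac (1 / (real N * real 1))) = u 1" unfolding u_def ..
    also have "\<dots> = frac (l 1)" by (rule ufr[symmetric])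
    finally have E: "of_nat K * l K = l 1 + of_int (floor (of_nat K * l K) - floor (l 1))"
      by (rule frac_eq_int_diff)
    moreover have "\<bar>of_nat K * l K - l 1\<bar> < 1"
      using A[OF K1, of K] lsmall[of 1] by simp
    ultimately have "\<bar>(of_int (floor (of_nat K * l K) - floor (l 1))::real)\<bar> < 1" by simp
    then have "floor (of_nat K * l K) - floor (l 1) = 0" by (rule int_abs_lt1)
    then show ?thesis using E by simp
  qed
  have "frac (of_nat N * l 1) = frac (of_nat N * u 1)" by (rule pl)
  also have "\<dots> = c (frac (of_nat N / (real N * real 1)))" by (rule cpu[symmetric])
  also have "\<dots> = 0" using N c0 by simp
  finally have "of_nat N * l 1 \<in> \<int>" by simp
  then obtain n where n: "of_nat N * l 1 = of_int n" by (auto elim: Ints_cases)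
  have rat: "c (frac (of_nat p / (real N * real K))) = frac (of_int n * (of_nat p / (real N * real K)))"
    if K1: "K \<ge> 1" for p K
  proof -
    have "c (frac (of_nat p / (real N * real K))) = frac (of_nat p * u K)" by (rule cpu)
    also have "\<dots> = frac (of_nat p * l K)" by (rule pl[symmetric])
    also have "of_nat p * l K = of_int n * (of_nat p / (real N * real K))"
    proof -
      have "l K = l 1 / real K" using lK[OF K1] K1 by (simp add: field_simps)
      also have "l 1 = of_int n / real N" using n N by (simp add: field_simps)
      finally show ?thesis using K1 N by (simp add: field_simps)
    qed
    finally show ?thesis .
  qed
  show ?thesis
  proof (intro exI ballI)
    fix t assume t: "t \<in> carrier T_grp"
    define y where "y = c t - of_int n * t"
    have "y \<in> \<int>"
    proof (rule T_abs_witness)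
      fix j :: nat assume j1: "j \<ge> 1"
      define \<epsilon> where "\<epsilon> = min \<delta> (1 / (8 * (\<bar>of_int n\<bar> + 1))) / real j"
      have \<epsilon>0: "\<epsilon> > 0" using \<delta>(1) j1 by (simp add: \<epsilon>_def)
      obtain K :: nat where K: "K > 0" "inverse (real K) < \<epsilon>" using ex_inverse_of_nat_less[OF \<epsilon>0] by blast
      have K1: "K \<ge> 1" using K by simp
      define M where "M = real N * real K"
      have M1: "M \<ge> real K" using N K by (simp add: M_def)
      have M0: "M > 0" using N K by (simp add: M_def)
      define p where "p = nat (floor (t * M))"
      have tM: "t * M \<ge> 0" using t M0 by simp
      have pr: "real p = of_int (floor (t * M))" unfolding p_def using tM by simp
      define d where "d = t - real p / M"
      have fl1: "real p \<le> t * M" using pr by simp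
      have fl2: "t * M < real p + 1" using pr by linarith
      have d0: "d \<ge> 0" unfolding d_def using fl1 M0 by (simp add: pos_divide_le_eq)
      have dMe: "d * M = t * M - real p" unfolding d_def using M0 by (simp add: algebra_simps)
      have dM: "d * M < 1" using dMe fl2 by simp
      have jd: "real j * d < min \<delta> (1 / (8 * (\<bar>of_int n\<bar> + 1)))"
      proof -
        have "d < 1 / M" using dM M0 by (simp add: pos_less_divide_eq)
        also have "1 / M \<le> 1 / real K" using M1 K by (intro divide_left_mono) simp_all
        also have "1 / real K < \<epsilon>" using K(2) by (simp add: inverse_eq_divide)
        finally have "d < \<epsilon>" .
        then have "real j * d < real j * \<epsilon>" using j1 by (intro mult_strict_left_mono) simp_all
        then show ?thesis using j1 by (simp add: \<epsilon>_def)
      qed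
      have ct: "c t = frac (of_int n * (real p / M) + c (frac d))"
      proof -
        have "t = real p / M + d" by (simp add: d_def)
        then have "c t = c (frac (real p / M + d))" using t by (simp add: II_frac)
        also have "\<dots> = frac (c (frac (real p / M)) + c (frac d))" by (rule cadd)
        also have "c (frac (real p / M)) = frac (of_int n * (real p / M))"
          using rat[OF K1, of p] by (simp add: M_def)
        finally show ?thesis by simp
      qed
      have ctI: "frac (c t) = c t" using cI[OF t] by (simp add: II_frac)
      have "frac (c t) = frac (of_int n * (real p / M) + c (frac d))" using ctI ct by simp
      then have "c t = of_int n * (real p / M) + c (frac d)
          + of_int (floor (c t) - floor (of_int n * (real p / M) + c (frac d)))"
        by (rule frac_eq_int_diff)
      then obtain m :: int where m: "c t = of_int n * (real p / M) + c (frac d) + of_int m" by blast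
      have "real j * y = (real j * c (frac d) + - (real j * (of_int n * d))) + of_int (int j * m)"
        unfolding y_def m d_def using M0 by (simp add: algebra_simps)
      then have "T_abs (real j * y) = T_abs ((real j * c (frac d) + - (real j * (of_int n * d))) + of_int (int j * m))"
        by (rule arg_cong)
      also have "\<dots> = T_abs (real j * c (frac d) + - (real j * (of_int n * d)))" by (rule T_abs_shift)
      also have "\<dots> \<le> T_abs (real j * c (frac d)) + T_abs (- (real j * (of_int n * d)))" by (rule T_abs_triangle)
      also have "\<dots> = T_abs (real j * c (frac d)) + T_abs (real j * (of_int n * d))" by (simp only: T_abs_neg)
      also have "T_abs (real j * c (frac d)) < 1/8"
      proof -
        have "T_abs (real j * c (frac d)) = T_abs (frac (real j * c (frac d)))" by simp
        also have "\<dots> = T_abs (c (frac (real j * d)))" using cmul by simp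
        also have "\<dots> < 1/8" using jd d0 j1 by (intro small) simp
        finally show ?thesis .
      qed
      also have "T_abs (real j * (of_int n * d)) < 1/8"
      proof -
        have "T_abs (real j * (of_int n * d)) \<le> \<bar>real j * (of_int n * d)\<bar>" by (rule T_abs_le_abs)
        also have "\<dots> = \<bar>of_int n\<bar> * (real j * d)" using d0 by (simp add: abs_mult)
        also have "\<dots> \<le> (\<bar>of_int n\<bar> + 1) * (real j * d)" using d0 by (simp add: mult_right_mono)
        also have "\<dots> < (\<bar>of_int n\<bar> + 1) * (1 / (8 * (\<bar>of_int n\<bar> + 1)))"
          using jd by (intro mult_strict_left_mono) simp_all
        also have "\<dots> = 1/8" by simp
        finally show ?thesis .
      qed
      finally show "T_abs (real j * y) < 1/4" by simp
    qed
    then obtain m where "y = of_int m" by (auto elim: Ints_cases)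
    then have "c t = of_int n * t + of_int m" by (simp add: y_def)
    then have "frac (c t) = frac (of_int n * t)" by simp
    then show "c t = frac (of_int n * t)" using cI[OF t] by (simp add: II_frac)
  qed
qed

lemma loc_const_cont:
  assumes "\<And>x. x \<in> topspace XT \<Longrightarrow> \<exists>U. openin XT U \<and> x \<in> U \<and> (\<forall>y\<in>U. g y = g x)"
    and "g \<in> topspace XT \<rightarrow> topspace YT"
  shows "continuous_map XT YT g"
  unfolding continuous_map_def
proof (intro conjI allI impI)
  show "g \<in> topspace XT \<rightarrow> topspace YT" by (rule assms(2))
  fix V assume "openin YT V"
  show "openin XT {x \<in> topspace XT. g x \<in> V}"
  proof (rule openin_subopen[THEN iffD2], rule ballI)
    fix x assume x: "x \<in> {x \<in> topspace XT. g x \<in> V}"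
    then have xt: "x \<in> topspace XT" and xv: "g x \<in> V" by simp_all
    obtain U where U: "openin XT U" "x \<in> U" "\<forall>y\<in>U. g y = g x" using assms(1)[OF xt] by blast
    have "U \<subseteq> topspace XT" using U(1) by (rule openin_subset)
    then have "U \<subseteq> {x \<in> topspace XT. g x \<in> V}" using U(3) xv by auto
    then show "\<exists>T. openin XT T \<and> x \<in> T \<and> T \<subseteq> {x \<in> topspace XT. g x \<in> V}" using U(1,2) by blast
  qed
qed

lemma cont_discrete_iff:
  "continuous_map XT (discrete_topology (UNIV::int set)) f \<longleftrightarrow>
     (\<forall>x\<in>topspace XT. \<exists>U. openin XT U \<and> x \<in> U \<and> (\<forall>y\<in>U. f y = f x))"
proof
  assume c: "continuous_map XT (discrete_topology (UNIV::int set)) f"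
  show "\<forall>x\<in>topspace XT. \<exists>U. openin XT U \<and> x \<in> U \<and> (\<forall>y\<in>U. f y = f x)"
  proof
    fix x assume x: "x \<in> topspace XT"
    have "openin XT {y \<in> topspace XT. f y \<in> {f x}}"
      using c by (rule openin_continuous_map_preimage) simp
    moreover have "x \<in> {y \<in> topspace XT. f y \<in> {f x}}" using x by simp
    moreover have "\<forall>y\<in>{y \<in> topspace XT. f y \<in> {f x}}. f y = f x" by simp
    ultimately show "\<exists>U. openin XT U \<and> x \<in> U \<and> (\<forall>y\<in>U. f y = f x)" by blast
  qed
next
  assume "\<forall>x\<in>topspace XT. \<exists>U. openin XT U \<and> x \<in> U \<and> (\<forall>y\<in>U. f y = f x)"
  then show "continuous_map XT (discrete_topology (UNIV::int set)) f"
    by (intro loc_const_cont) (blast, simp)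
qed

lemma carrier_Cp: "f \<in> carrier (Cp_Z XX) \<longleftrightarrow>
    f \<in> extensional (topspace XX) \<and> continuous_map XX (discrete_topology (UNIV::int set)) f"
  by (simp add: Cp_Z_def)
lemma mult_Cp: "f \<otimes>\<^bsub>Cp_Z XX\<^esub> g = restrict (\<lambda>x. f x + g x) (topspace XX)"
  by (simp add: Cp_Z_def)
lemma one_Cp: "\<one>\<^bsub>Cp_Z XX\<^esub> = restrict (\<lambda>x. 0) (topspace XX)"
  by (simp add: Cp_Z_def)

lemma restrict_in_Cp:
  assumes "\<And>x. x \<in> topspace XX \<Longrightarrow> \<exists>U. openin XX U \<and> x \<in> U \<and> (\<forall>y\<in>U. h y = h x)"
  shows "restrict h (topspace XX) \<in> carrier (Cp_Z XX)"
  unfolding carrier_Cp cont_discrete_iff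
proof (intro conjI ballI)
  show "restrict h (topspace XX) \<in> extensional (topspace XX)" by simp
  fix x assume x: "x \<in> topspace XX"
  obtain U where U: "openin XX U" "x \<in> U" "\<forall>y\<in>U. h y = h x" using assms[OF x] by blast
  have Us: "U \<subseteq> topspace XX" using U(1) by (rule openin_subset)
  have "\<forall>y\<in>U. restrict h (topspace XX) y = restrict h (topspace XX) x"
  proof
    fix y assume "y \<in> U"
    then show "restrict h (topspace XX) y = restrict h (topspace XX) x" using U(3) Us x by auto
  qed
  then show "\<exists>U. openin XX U \<and> x \<in> U \<and> (\<forall>y\<in>U. restrict h (topspace XX) y = restrict h (topspace XX) x)"
    using U(1,2) by blast
qed

lemma Cp_loc_const:
  assumes "f \<in> carrier (Cp_Z XX)" "x \<in> topspace XX"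
  obtains U where "openin XX U" "x \<in> U" "\<forall>y\<in>U. f y = f x"
proof -
  have "continuous_map XX (discrete_topology (UNIV::int set)) f" using assms(1) by (simp add: carrier_Cp)
  then have "\<forall>x\<in>topspace XX. \<exists>U. openin XX U \<and> x \<in> U \<and> (\<forall>y\<in>U. f y = f x)"
    by (simp only: cont_discrete_iff)
  then obtain U where "openin XX U" "x \<in> U" "\<forall>y\<in>U. f y = f x" using assms(2) by blast
  then show ?thesis by (rule that)
qed

lemma Cp_ext: "f \<in> carrier (Cp_Z XX) \<Longrightarrow> f \<in> extensional (topspace XX)"
  by (simp add: carrier_Cp)

lemma Cp_eqI:
  assumes "f \<in> carrier (Cp_Z XX)" "g \<in> carrier (Cp_Z XX)" "\<And>x. x \<in> topspace XX \<Longrightarrow> f x = g x"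
  shows "f = g"
proof -
  have "f \<in> extensional (topspace XX)" "g \<in> extensional (topspace XX)" using assms(1,2) by (simp_all add: Cp_ext)
  then show ?thesis using assms(3) by (rule extensionalityI)
qed

lemma Cp_mult_closed:
  assumes f: "f \<in> carrier (Cp_Z XX)" and g: "g \<in> carrier (Cp_Z XX)"
  shows "restrict (\<lambda>x. f x + g x) (topspace XX) \<in> carrier (Cp_Z XX)"
proof (rule restrict_in_Cp)
  fix x assume x: "x \<in> topspace XX"
  obtain U where U: "openin XX U" "x \<in> U" "\<forall>y\<in>U. f y = f x" using Cp_loc_const[OF f x] .
  obtain V where V: "openin XX V" "x \<in> V" "\<forall>y\<in>V. g y = g x" using Cp_loc_const[OF g x] .
  have "openin XX (U \<inter> V)" using U(1) V(1) by (rule openin_Int)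
  moreover have "\<forall>y\<in>U \<inter> V. f y + g y = f x + g x" using U(3) V(3) by simp
  ultimately show "\<exists>U. openin XX U \<and> x \<in> U \<and> (\<forall>y\<in>U. f y + g y = f x + g x)"
    using U(2) V(2) by blast
qed

lemma Cp_neg_closed:
  assumes f: "f \<in> carrier (Cp_Z XX)"
  shows "restrict (\<lambda>x. - f x) (topspace XX) \<in> carrier (Cp_Z XX)"
proof (rule restrict_in_Cp)
  fix x assume x: "x \<in> topspace XX"
  obtain U where U: "openin XX U" "x \<in> U" "\<forall>y\<in>U. f y = f x" using Cp_loc_const[OF f x] .
  have "\<forall>y\<in>U. - f y = - f x" using U(3) by simp
  then show "\<exists>U. openin XX U \<and> x \<in> U \<and> (\<forall>y\<in>U. - f y = - f x)"
    using U(1,2) by blast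
qed

lemma Cp_zero_closed: "restrict (\<lambda>x. 0) (topspace XX) \<in> carrier (Cp_Z XX)"
proof (rule restrict_in_Cp)
  fix x assume "x \<in> topspace XX"
  then show "\<exists>U. openin XX U \<and> x \<in> U \<and> (\<forall>y\<in>U. (0::int) = 0)"
    using openin_topspace[of XX] by blast
qed

lemma comm_group_Cp: "comm_group (Cp_Z XX)"
proof (rule comm_groupI)
  fix x y z assume x: "x \<in> carrier (Cp_Z XX)" and y: "y \<in> carrier (Cp_Z XX)" and z: "z \<in> carrier (Cp_Z XX)"
  show "x \<otimes>\<^bsub>Cp_Z XX\<^esub> y \<in> carrier (Cp_Z XX)" unfolding mult_Cp using x y by (rule Cp_mult_closed)
  show "x \<otimes>\<^bsub>Cp_Z XX\<^esub> y \<otimes>\<^bsub>Cp_Z XX\<^esub> z = x \<otimes>\<^bsub>Cp_Z XX\<^esub> (y \<otimes>\<^bsub>Cp_Z XX\<^esub> z)"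
    unfolding mult_Cp by (auto simp: fun_eq_iff restrict_def)
  show "x \<otimes>\<^bsub>Cp_Z XX\<^esub> y = y \<otimes>\<^bsub>Cp_Z XX\<^esub> x"
    unfolding mult_Cp by (auto simp: fun_eq_iff restrict_def)
  have "restrict (\<lambda>xa. restrict (\<lambda>x. 0) (topspace XX) xa + x xa) (topspace XX) = restrict x (topspace XX)"
    by (auto simp: fun_eq_iff restrict_def)
  then show "\<one>\<^bsub>Cp_Z XX\<^esub> \<otimes>\<^bsub>Cp_Z XX\<^esub> x = x"
    unfolding mult_Cp one_Cp using extensional_restrict[OF Cp_ext[OF x]] by simp
  have "restrict (\<lambda>xa. restrict (\<lambda>x'. - x x') (topspace XX) xa + x xa) (topspace XX) = restrict (\<lambda>x. 0) (topspace XX)"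
    by (auto simp: fun_eq_iff restrict_def)
  then show "\<exists>y\<in>carrier (Cp_Z XX). y \<otimes>\<^bsub>Cp_Z XX\<^esub> x = \<one>\<^bsub>Cp_Z XX\<^esub>"
    unfolding mult_Cp one_Cp using Cp_neg_closed[OF x] by blast
qed (simp add: one_Cp Cp_zero_closed)

lemma inv_Cp:
  assumes f: "f \<in> carrier (Cp_Z XX)"
  shows "inv\<^bsub>Cp_Z XX\<^esub> f = restrict (\<lambda>x. - f x) (topspace XX)"
proof -
  interpret C: comm_group "Cp_Z XX" by (rule comm_group_Cp)
  have "restrict (\<lambda>xa. restrict (\<lambda>x'. - f x') (topspace XX) xa + f xa) (topspace XX) = restrict (\<lambda>x. 0) (topspace XX)"
    by (auto simp: fun_eq_iff restrict_def)
  then have "restrict (\<lambda>x. - f x) (topspace XX) \<otimes>\<^bsub>Cp_Z XX\<^esub> f = \<one>\<^bsub>Cp_Z XX\<^esub>"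
    unfolding mult_Cp one_Cp by simp
  then show ?thesis using C.inv_equality f Cp_neg_closed[OF f] by blast
qed

lemma Cp_pow_nat:
  assumes f: "f \<in> carrier (Cp_Z XX)"
  shows "f [^]\<^bsub>Cp_Z XX\<^esub> (n::nat) = restrict (\<lambda>x. int n * f x) (topspace XX)"
proof (induction n)
  case 0 then show ?case by (simp add: one_Cp)
next
  case (Suc n)
  have "f [^]\<^bsub>Cp_Z XX\<^esub> Suc n = f [^]\<^bsub>Cp_Z XX\<^esub> n \<otimes>\<^bsub>Cp_Z XX\<^esub> f" by (rule nat_pow_Suc)
  also have "\<dots> = restrict (\<lambda>x. restrict (\<lambda>x. int n * f x) (topspace XX) x + f x) (topspace XX)"
    unfolding Suc mult_Cp ..
  also have "\<dots> = restrict (\<lambda>x. int (Suc n) * f x) (topspace XX)"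
    by (auto simp: fun_eq_iff restrict_def algebra_simps)
  finally show ?case .
qed

lemma Cp_pow_int:
  assumes f: "f \<in> carrier (Cp_Z XX)"
  shows "f [^]\<^bsub>Cp_Z XX\<^esub> (k::int) = restrict (\<lambda>x. k * f x) (topspace XX)"
proof (cases "k < 0")
  case True
  interpret C: comm_group "Cp_Z XX" by (rule comm_group_Cp)
  have "f [^]\<^bsub>Cp_Z XX\<^esub> k = inv\<^bsub>Cp_Z XX\<^esub> (f [^]\<^bsub>Cp_Z XX\<^esub> nat (- k))"
    using True by (simp only: int_pow_def2 if_True)
  also have "\<dots> = inv\<^bsub>Cp_Z XX\<^esub> (restrict (\<lambda>x. int (nat (- k)) * f x) (topspace XX))"
    using f by (simp only: Cp_pow_nat)
  also have "\<dots> = restrict (\<lambda>x. - restrict (\<lambda>x. int (nat (- k)) * f x) (topspace XX) x) (topspace XX)"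
  proof (rule inv_Cp)
    show "restrict (\<lambda>x. int (nat (- k)) * f x) (topspace XX) \<in> carrier (Cp_Z XX)"
      using C.nat_pow_closed[OF f, of "nat (-k)"] Cp_pow_nat[OF f, of "nat (-k)"] by simp
  qed
  also have "\<dots> = restrict (\<lambda>x. k * f x) (topspace XX)"
    using True by (auto simp: fun_eq_iff restrict_def)
  finally show ?thesis .
next
  case False
  have "0 \<le> k" using False by simp
  then obtain n where n: "k = int n" by (rule nonneg_int_cases)
  have "f [^]\<^bsub>Cp_Z XX\<^esub> k = f [^]\<^bsub>Cp_Z XX\<^esub> n" unfolding n by (rule int_pow_int)
  also have "\<dots> = restrict (\<lambda>x. k * f x) (topspace XX)" using f n by (simp add: Cp_pow_nat)
  finally show ?thesis .
qed

lemma topspace_Cp_top[simp]: "topspace (Cp_Z_top XX) = carrier (Cp_Z XX)"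
proof -
  have "carrier (Cp_Z XX) \<subseteq> topspace (product_topology (\<lambda>_. discrete_topology (UNIV::int set)) (topspace XX))"
    by (auto simp: carrier_Cp PiE_def)
  then show ?thesis unfolding Cp_Z_top_def by auto
qed

lemma Cp_K_open:
  assumes "finite F" "F \<subseteq> topspace XX"
  shows "openin (Cp_Z_top XX) {f \<in> carrier (Cp_Z XX). \<forall>x\<in>F. f x = f0 x}"
proof -
  define T where "T = {f \<in> topspace (product_topology (\<lambda>_. discrete_topology (UNIV::int set)) (topspace XX)). \<forall>x\<in>F. f x = f0 x}"
  have "openin (product_topology (\<lambda>_. discrete_topology (UNIV::int set)) (topspace XX)) T"
    unfolding openin_product_topology_alt
  proof
    fix f assume f: "f \<in> T"
    define U where "U i = (if i \<in> F then {f0 i} else UNIV)" for i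
    show "\<exists>U. finite {i \<in> topspace XX. U i \<noteq> topspace (discrete_topology UNIV)} \<and>
             (\<forall>i\<in>topspace XX. openin (discrete_topology UNIV) (U i)) \<and> f \<in> Pi\<^sub>E (topspace XX) U \<and> Pi\<^sub>E (topspace XX) U \<subseteq> T"
    proof (intro exI[of _ U] conjI)
      have "{i \<in> topspace XX. U i \<noteq> topspace (discrete_topology UNIV)} \<subseteq> F" by (auto simp: U_def)
      then show "finite {i \<in> topspace XX. U i \<noteq> topspace (discrete_topology UNIV)}" using assms(1) finite_subset by blast
      show "\<forall>i\<in>topspace XX. openin (discrete_topology UNIV) (U i)" by simp
      show "f \<in> Pi\<^sub>E (topspace XX) U" using f by (auto simp: T_def U_def PiE_def Pi_def)
      show "Pi\<^sub>E (topspace XX) U \<subseteq> T" using assms(2) by (auto simp: T_def U_def PiE_def Pi_def)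
    qed
  qed
  moreover have "{f \<in> carrier (Cp_Z XX). \<forall>x\<in>F. f x = f0 x} = T \<inter> carrier (Cp_Z XX)"
    by (auto simp: T_def carrier_Cp PiE_def)
  ultimately show ?thesis unfolding Cp_Z_top_def openin_subtopology by blast
qed

lemma Cp_K_base:
  assumes "openin (Cp_Z_top XX) U" "f0 \<in> U"
  shows "\<exists>F. finite F \<and> F \<subseteq> topspace XX \<and> {f \<in> carrier (Cp_Z XX). \<forall>x\<in>F. f x = f0 x} \<subseteq> U"
proof -
  obtain T where T: "openin (product_topology (\<lambda>_. discrete_topology (UNIV::int set)) (topspace XX)) T"
    "U = T \<inter> carrier (Cp_Z XX)"
    using assms(1) unfolding Cp_Z_top_def openin_subtopology by blast
  have "f0 \<in> T" using assms(2) T(2) by blast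
  then obtain V where V: "finite {i \<in> topspace XX. V i \<noteq> topspace (discrete_topology (UNIV::int set))}"
     "f0 \<in> Pi\<^sub>E (topspace XX) V" "Pi\<^sub>E (topspace XX) V \<subseteq> T"
    using T(1) unfolding openin_product_topology_alt by blast
  define F where "F = {i \<in> topspace XX. V i \<noteq> topspace (discrete_topology (UNIV::int set))}"
  show ?thesis
  proof (intro exI[of _ F] conjI)
    show "finite F" using V(1) by (simp add: F_def)
    show "F \<subseteq> topspace XX" by (auto simp: F_def)
    show "{f \<in> carrier (Cp_Z XX). \<forall>x\<in>F. f x = f0 x} \<subseteq> U"
    proof
      fix f assume f: "f \<in> {f \<in> carrier (Cp_Z XX). \<forall>x\<in>F. f x = f0 x}"
      have "f \<in> Pi\<^sub>E (topspace XX) V"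
      proof -
        have "f \<in> extensional (topspace XX)" using f by (simp add: carrier_Cp)
        moreover have "\<forall>i\<in>topspace XX. f i \<in> V i"
        proof
          fix i assume i: "i \<in> topspace XX"
          show "f i \<in> V i"
          proof (cases "i \<in> F")
            case True
            then have "f i = f0 i" using f by simp
            then show ?thesis using V(2) i by (auto simp: PiE_def Pi_def)
          next
            case False
            then have "V i = UNIV" using i by (simp add: F_def)
            then show ?thesis by simp
          qed
        qed
        ultimately show ?thesis by (auto simp: PiE_def Pi_def)
      qed
      then show "f \<in> U" using V(3) T(2) f by blast
    qed
  qed
qed

lemma indicator_Cp:
  assumes "openin XX E" "closedin XX E"
  shows "restrict (\<lambda>y. if y \<in> E then 1 else 0) (topspace XX) \<in> carrier (Cp_Z XX)"
proof (rule restrict_in_Cp)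
  fix x assume x: "x \<in> topspace XX"
  show "\<exists>U. openin XX U \<and> x \<in> U \<and> (\<forall>y\<in>U. (if y \<in> E then 1 else 0) = (if x \<in> E then (1::int) else 0))"
  proof (cases "x \<in> E")
    case True then show ?thesis using assms(1) by (intro exI[of _ E]) auto
  next
    case False
    have "openin XX (topspace XX - E)" using assms(2) by (simp add: openin_diff)
    then show ?thesis using False x by (intro exI[of _ "topspace XX - E"]) auto
  qed
qed

lemma sep_clopen:
  assumes H: "Hausdorff_space XX" and Z: "zero_dimensional XX" and x: "x \<in> topspace XX" and F: "finite F"
  shows "\<exists>E. openin XX E \<and> closedin XX E \<and> x \<in> E \<and> E \<inter> F \<subseteq> {x}"
proof -
  have t1: "t1_space XX" using H by (rule Hausdorff_imp_t1_space)
  have fin: "finite ((F \<inter> topspace XX) - {x})" using F by simp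
  have sub: "(F \<inter> topspace XX) - {x} \<subseteq> topspace XX" by blast
  have "closedin XX ((F \<inter> topspace XX) - {x})"
    using t1 fin sub unfolding t1_space_closedin_finite by blast
  then have U: "openin XX (topspace XX - ((F \<inter> topspace XX) - {x}))" by (simp add: openin_diff)
  have "x \<in> topspace XX - ((F \<inter> topspace XX) - {x})" using x by simp
  then obtain V where V: "openin XX V" "closedin XX V" "x \<in> V" "V \<subseteq> topspace XX - ((F \<inter> topspace XX) - {x})"
  proof -
    have "\<forall>U x. openin XX U \<and> x \<in> U \<longrightarrow> (\<exists>V. openin XX V \<and> closedin XX V \<and> x \<in> V \<and> V \<subseteq> U)"
      using Z unfolding zero_dimensional_def by simp
    then have "\<exists>V. openin XX V \<and> closedin XX V \<and> x \<in> V \<and> V \<subseteq> topspace XX - ((F \<inter> topspace XX) - {x})"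
      using U \<open>x \<in> topspace XX - ((F \<inter> topspace XX) - {x})\<close> by blast
    then show ?thesis using that by blast
  qed
  show ?thesis using V by (intro exI[of _ V]) auto
qed

definition Nf :: "('a \<Rightarrow>\<^sub>0 int) \<Rightarrow> ('a \<Rightarrow> int) \<Rightarrow> int" where
  "Nf a f = (\<Sum>x\<in>Poly_Mapping.keys a. Poly_Mapping.lookup a x * f x)"

definition bq :: "('a \<Rightarrow>\<^sub>0 int) \<Rightarrow> ('a \<Rightarrow> int) \<Rightarrow> real \<Rightarrow> real" where
  "bq a f s = frac (of_int (Nf a f) * s)"

lemma Nf_superset:
  assumes "finite F" "Poly_Mapping.keys a \<subseteq> F"
  shows "Nf a f = (\<Sum>x\<in>F. Poly_Mapping.lookup a x * f x)"
  unfolding Nf_def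
proof (rule sum.mono_neutral_left[OF assms(1) assms(2)])
  show "\<forall>i\<in>F - Poly_Mapping.keys a. Poly_Mapping.lookup a i * f i = 0"
    by (simp add: in_keys_iff)
qed

lemma Nf_add: "Nf (a + b) f = Nf a f + Nf b f"
proof -
  define F where "F = Poly_Mapping.keys a \<union> Poly_Mapping.keys b"
  have F: "finite F" by (simp add: F_def)
  have "Nf (a + b) f = (\<Sum>x\<in>F. Poly_Mapping.lookup (a + b) x * f x)"
    using F keys_add[of a b] by (intro Nf_superset) (simp_all add: F_def)
  also have "\<dots> = (\<Sum>x\<in>F. Poly_Mapping.lookup a x * f x) + (\<Sum>x\<in>F. Poly_Mapping.lookup b x * f x)"
    by (simp add: lookup_add algebra_simps sum.distrib)
  also have "(\<Sum>x\<in>F. Poly_Mapping.lookup a x * f x) = Nf a f"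
    using F by (intro Nf_superset[symmetric]) (simp_all add: F_def)
  also have "(\<Sum>x\<in>F. Poly_Mapping.lookup b x * f x) = Nf b f"
    using F by (intro Nf_superset[symmetric]) (simp_all add: F_def)
  finally show ?thesis .
qed

lemma Nf_cong: "(\<And>x. x \<in> Poly_Mapping.keys a \<Longrightarrow> f x = g x) \<Longrightarrow> Nf a f = Nf a g"
  unfolding Nf_def by (rule sum.cong) simp_all

lemma Nf_mult:
  assumes "Poly_Mapping.keys a \<subseteq> topspace XX"
  shows "Nf a (f \<otimes>\<^bsub>Cp_Z XX\<^esub> g) = Nf a f + Nf a g"
proof -
  have "Nf a (f \<otimes>\<^bsub>Cp_Z XX\<^esub> g) = Nf a (\<lambda>x. f x + g x)"
    unfolding mult_Cp using assms by (intro Nf_cong) auto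
  also have "\<dots> = Nf a f + Nf a g" unfolding Nf_def by (simp add: algebra_simps sum.distrib)
  finally show ?thesis .
qed

lemma bq_in: "bq a f s \<in> carrier T_grp" by (simp add: bq_def frac_lt_1)

lemma bq_bihom:
  assumes a: "Poly_Mapping.keys a \<subseteq> topspace XX"
  shows "cont_bihom (Cp_Z XX) (Cp_Z_top XX) T_grp T_top T_grp T_top (bq a)"
  unfolding cont_bihom_def
proof (intro conjI ballI allI impI)
  fix f assume f: "f \<in> carrier (Cp_Z XX)"
  show "(\<lambda>y. bq a f y) \<in> hom T_grp T_grp" unfolding bq_def by (rule char_T_hom)
  show "continuous_map T_top T_top (\<lambda>y. bq a f y)" unfolding bq_def by (rule cont_char)
next
  fix s assume s: "s \<in> carrier T_grp"
  show "(\<lambda>x. bq a x s) \<in> hom (Cp_Z XX) T_grp"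
  proof (rule homI)
    fix f g assume f: "f \<in> carrier (Cp_Z XX)" and g: "g \<in> carrier (Cp_Z XX)"
    have "bq a (f \<otimes>\<^bsub>Cp_Z XX\<^esub> g) s = frac (of_int (Nf a f + Nf a g) * s)"
      unfolding bq_def Nf_mult[OF a] ..
    also have "\<dots> = frac (frac (of_int (Nf a f) * s) + frac (of_int (Nf a g) * s))"
      by (simp add: algebra_simps)
    finally show "bq a (f \<otimes>\<^bsub>Cp_Z XX\<^esub> g) s = bq a f s \<otimes>\<^bsub>T_grp\<^esub> bq a g s"
      by (simp add: bq_def)
  qed (rule bq_in)
  show "continuous_map (Cp_Z_top XX) T_top (\<lambda>x. bq a x s)"
  proof (rule loc_const_cont)
    fix f0 assume f0: "f0 \<in> topspace (Cp_Z_top XX)"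
    define U where "U = {f \<in> carrier (Cp_Z XX). \<forall>x\<in>Poly_Mapping.keys a. f x = f0 x}"
    have "openin (Cp_Z_top XX) U" unfolding U_def using a by (intro Cp_K_open) simp_all
    moreover have "f0 \<in> U" using f0 by (simp add: U_def)
    moreover have "\<forall>f\<in>U. bq a f s = bq a f0 s"
    proof
      fix f assume "f \<in> U"
      then have "Nf a f = Nf a f0" unfolding U_def by (intro Nf_cong) simp
      then show "bq a f s = bq a f0 s" by (simp add: bq_def)
    qed
    ultimately show "\<exists>U. openin (Cp_Z_top XX) U \<and> f0 \<in> U \<and> (\<forall>y\<in>U. bq a y s = bq a f0 s)" by blast
  next
    show "(\<lambda>x. bq a x s) \<in> topspace (Cp_Z_top XX) \<rightarrow> topspace T_top"
      by (auto simp: Pi_def bq_def frac_lt_1)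
  qed
next
  fix W assume W: "openin T_top W \<and> \<one>\<^bsub>T_grp\<^esub> \<in> W"
  define z where "z = \<one>\<^bsub>Cp_Z XX\<^esub>"
  define U where "U = {f \<in> carrier (Cp_Z XX). \<forall>x\<in>Poly_Mapping.keys a. f x = z x}"
  have zc: "z \<in> carrier (Cp_Z XX)" unfolding z_def one_Cp by (rule Cp_zero_closed)
  have o1: "openin (Cp_Z_top XX) U" unfolding U_def using a by (intro Cp_K_open) simp_all
  have o2: "z \<in> U" using zc by (simp add: U_def)
  have o3: "openin T_top (topspace T_top)" by (rule openin_topspace)
  have o4: "\<one>\<^bsub>T_grp\<^esub> \<in> topspace T_top" by simp
  have o5: "\<forall>f\<in>U. \<forall>s\<in>topspace T_top. bq a f s \<in> W"
  proof (intro ballI)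
    fix f s assume "f \<in> U" "s \<in> topspace T_top"
    have "Nf a f = Nf a z" using \<open>f \<in> U\<close> unfolding U_def by (intro Nf_cong) simp
    also have "Nf a z = 0" unfolding Nf_def z_def one_Cp using a by (intro sum.neutral) auto
    finally show "bq a f s \<in> W" using W by (simp add: bq_def)
  qed
  show "\<exists>U V. openin (Cp_Z_top XX) U \<and> \<one>\<^bsub>Cp_Z XX\<^esub> \<in> U \<and> openin T_top V \<and> \<one>\<^bsub>T_grp\<^esub> \<in> V \<and>
       (\<forall>x\<in>U. \<forall>y\<in>V. bq a x y \<in> W)"
    apply (rule exI[of _ U], rule exI[of _ "topspace T_top"])
    using o1 o2 o3 o4 o5 unfolding z_def by (intro conjI)
qed

definition indf :: "'a topology \<Rightarrow> 'a set \<Rightarrow> 'a \<Rightarrow> int" where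
  "indf XX E = restrict (\<lambda>y. if y \<in> E then 1 else 0) (topspace XX)"

lemma bihom_parts:
  assumes "cont_bihom (Cp_Z XX) (Cp_Z_top XX) T_grp T_top T_grp T_top b"
  shows "\<And>f. f \<in> carrier (Cp_Z XX) \<Longrightarrow> (\<lambda>s. b f s) \<in> hom T_grp T_grp"
    and "\<And>f. f \<in> carrier (Cp_Z XX) \<Longrightarrow> continuous_map T_top T_top (\<lambda>s. b f s)"
    and "\<And>s. s \<in> carrier T_grp \<Longrightarrow> (\<lambda>f. b f s) \<in> hom (Cp_Z XX) T_grp"
    and "\<And>W. openin T_top W \<Longrightarrow> 0 \<in> W \<Longrightarrow> \<exists>U V. openin (Cp_Z_top XX) U \<and> \<one>\<^bsub>Cp_Z XX\<^esub> \<in> U \<and>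
            openin T_top V \<and> 0 \<in> V \<and> (\<forall>x\<in>U. \<forall>y\<in>V. b x y \<in> W)"
proof -
  have d: "(\<forall>x \<in> carrier (Cp_Z XX). (\<lambda>y. b x y) \<in> hom T_grp T_grp \<and> continuous_map T_top T_top (\<lambda>y. b x y)) \<and>
     (\<forall>y \<in> carrier T_grp. (\<lambda>x. b x y) \<in> hom (Cp_Z XX) T_grp \<and> continuous_map (Cp_Z_top XX) T_top (\<lambda>x. b x y)) \<and>
     (\<forall>W. openin T_top W \<and> \<one>\<^bsub>T_grp\<^esub> \<in> W \<longrightarrow>
        (\<exists>U V. openin (Cp_Z_top XX) U \<and> \<one>\<^bsub>Cp_Z XX\<^esub> \<in> U \<and> openin T_top V \<and> \<one>\<^bsub>T_grp\<^esub> \<in> V \<and>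
               (\<forall>x\<in>U. \<forall>y\<in>V. b x y \<in> W)))"
    using assms unfolding cont_bihom_def .
  show "\<And>f. f \<in> carrier (Cp_Z XX) \<Longrightarrow> (\<lambda>s. b f s) \<in> hom T_grp T_grp" using d by simp
  show "\<And>f. f \<in> carrier (Cp_Z XX) \<Longrightarrow> continuous_map T_top T_top (\<lambda>s. b f s)" using d by simp
  show "\<And>s. s \<in> carrier T_grp \<Longrightarrow> (\<lambda>f. b f s) \<in> hom (Cp_Z XX) T_grp" using d by simp
  fix W assume "openin T_top W" "0 \<in> W"
  then have "openin T_top W \<and> \<one>\<^bsub>T_grp\<^esub> \<in> W" by simp
  then have "\<exists>U V. openin (Cp_Z_top XX) U \<and> \<one>\<^bsub>Cp_Z XX\<^esub> \<in> U \<and> openin T_top V \<and> \<one>\<^bsub>T_grp\<^esub> \<in> V \<and>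
               (\<forall>x\<in>U. \<forall>y\<in>V. b x y \<in> W)" using d by blast
  then show "\<exists>U V. openin (Cp_Z_top XX) U \<and> \<one>\<^bsub>Cp_Z XX\<^esub> \<in> U \<and>
            openin T_top V \<and> 0 \<in> V \<and> (\<forall>x\<in>U. \<forall>y\<in>V. b x y \<in> W)" by simp
qed

lemma bihom_classify:
  assumes H: "Hausdorff_space XX" and Z: "zero_dimensional XX"
    and b: "cont_bihom (Cp_Z XX) (Cp_Z_top XX) T_grp T_top T_grp T_top b"
  shows "\<exists>a. Poly_Mapping.keys a \<subseteq> topspace XX \<and>
     (\<forall>f\<in>carrier (Cp_Z XX). \<forall>s\<in>carrier T_grp. b f s = bq a f s)"
proof -
  interpret C: comm_group "Cp_Z XX" by (rule comm_group_Cp)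
  note b1 = bihom_parts(1)[OF b] and b2 = bihom_parts(2)[OF b]
    and b3 = bihom_parts(3)[OF b] and b4 = bihom_parts(4)[OF b]
  have gh1: "group_hom T_grp T_grp (\<lambda>s. b f s)" if "f \<in> carrier (Cp_Z XX)" for f
    unfolding group_hom_def group_hom_axioms_def using Tg.is_group b1[OF that] by simp
  have gh3: "group_hom (Cp_Z XX) T_grp (\<lambda>f. b f s)" if "s \<in> carrier T_grp" for s
    unfolding group_hom_def group_hom_axioms_def using Tg.is_group C.is_group b3[OF that] by simp
  have bI: "b f s \<in> carrier T_grp" if "f \<in> carrier (Cp_Z XX)" "s \<in> carrier T_grp" for f s
    using b3[OF that(2)] that(1) by (auto simp: hom_def)
  have W0: "openin T_top {s. 0 \<le> s \<and> s < 1 \<and> T_abs s < 1/4}" by (rule T_abs_ball_open) simp_all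
  have W00: "(0::real) \<in> {s. 0 \<le> s \<and> s < 1 \<and> T_abs s < 1/4}" by simp
  obtain U V where UV: "openin (Cp_Z_top XX) U" "\<one>\<^bsub>Cp_Z XX\<^esub> \<in> U" "openin T_top V" "0 \<in> V"
    "\<forall>x\<in>U. \<forall>y\<in>V. b x y \<in> {s. 0 \<le> s \<and> s < 1 \<and> T_abs s < 1/4}"
    using b4[OF W0 W00] by blast
  obtain F where F: "finite F" "F \<subseteq> topspace XX"
    "{f \<in> carrier (Cp_Z XX). \<forall>x\<in>F. f x = \<one>\<^bsub>Cp_Z XX\<^esub> x} \<subseteq> U"
    using Cp_K_base[OF UV(1) UV(2)] by blast
  define K where "K = {f \<in> carrier (Cp_Z XX). \<forall>x\<in>F. f x = 0}"
  have KU: "K \<subseteq> U"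
  proof
    fix f assume "f \<in> K"
    then have "f \<in> {f \<in> carrier (Cp_Z XX). \<forall>x\<in>F. f x = \<one>\<^bsub>Cp_Z XX\<^esub> x}"
      using F(2) by (auto simp: K_def one_Cp)
    then show "f \<in> U" using F(3) by blast
  qed
  have step3: "b f s = 0" if f: "f \<in> K" and s: "s \<in> V" for f s
  proof -
    have fC: "f \<in> carrier (Cp_Z XX)" using f by (simp add: K_def)
    have "V \<subseteq> topspace T_top" by (rule openin_subset[OF UV(3)])
    then have sI: "s \<in> carrier T_grp" using s by auto
    have "b f s \<in> \<int>"
    proof (rule T_abs_witness)
      fix j :: nat assume "j \<ge> 1"
      have pw: "f [^]\<^bsub>Cp_Z XX\<^esub> j = restrict (\<lambda>x. int j * f x) (topspace XX)" by (rule Cp_pow_nat[OF fC])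
      have "f [^]\<^bsub>Cp_Z XX\<^esub> j \<in> K"
        unfolding K_def using C.nat_pow_closed[OF fC, of j] f F(2) unfolding pw by (auto simp: K_def)
      then have "f [^]\<^bsub>Cp_Z XX\<^esub> j \<in> U" by (rule subsetD[OF KU])
      then have "b (f [^]\<^bsub>Cp_Z XX\<^esub> j) s \<in> {s. 0 \<le> s \<and> s < 1 \<and> T_abs s < 1/4}"
        using bspec[OF bspec[OF UV(5)] s] by simp
      moreover have "b (f [^]\<^bsub>Cp_Z XX\<^esub> j) s = frac (of_nat j * b f s)"
        using group_hom.hom_nat_pow[OF gh3[OF sI] fC, of j] T_pow_nat[OF bI[OF fC sI]] by simp
      ultimately have "T_abs (frac (of_nat j * b f s)) < 1/4" by simp
      then show "T_abs (of_nat j * b f s) < 1/4" by simp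
    qed
    then obtain m where m: "b f s = of_int m" by (auto elim: Ints_cases)
    moreover have "0 \<le> b f s \<and> b f s < 1" using bI[OF fC sI] by simp
    ultimately have "m = 0" by simp
    then show "b f s = 0" using m by simp
  qed
  have V0: "frac 0 \<in> V" using UV(4) by simp
  obtain \<epsilon> where \<epsilon>: "\<epsilon> > 0" "\<And>z. \<bar>z - 0\<bar> < \<epsilon> \<Longrightarrow> frac z \<in> V" using T_open_nbhd[OF UV(3) V0] by blast
  obtain N :: nat where N: "N > 0" "inverse (real N) < \<epsilon>" using ex_inverse_of_nat_less[OF \<epsilon>(1)] by blast
  have step4: "b f s = 0" if f: "f \<in> K" and s: "s \<in> carrier T_grp" for f s
  proof -
    have fC: "f \<in> carrier (Cp_Z XX)" using f by (simp add: K_def)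
    have s01: "0 \<le> s" "s < 1" using s by simp_all
    have "s / real N < \<epsilon>"
    proof -
      have "s / real N \<le> 1 / real N" using s01 N(1) by (simp add: divide_right_mono)
      also have "\<dots> < \<epsilon>" using N(2) by (simp add: inverse_eq_divide)
      finally show ?thesis .
    qed
    moreover have "s / real N \<ge> 0" using s01 by simp
    ultimately have "frac (s / real N) \<in> V" using \<epsilon>(2) by simp
    moreover have sN: "frac (s / real N) = s / real N"
    proof -
      have N1: "1 \<le> real N" using N(1) by simp
      have "s * 1 \<le> s * real N" using s01 N1 by (intro mult_left_mono) auto
      then have "s / real N \<le> s" using N(1) by (simp add: divide_le_eq)
      then show ?thesis using s01 by (simp add: frac_eq)
    qed
    ultimately have sNV: "s / real N \<in> V" by simp
    have "0 \<le> frac (s / real N) \<and> frac (s / real N) < 1" by (simp add: frac_lt_1)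
    then have sNI: "s / real N \<in> carrier T_grp" unfolding sN by simp
    have "(s / real N) [^]\<^bsub>T_grp\<^esub> N = frac (of_nat N * (s / real N))" by (rule T_pow_nat[OF sNI])
    also have "\<dots> = s" using N(1) s01 by (simp add: frac_eq)
    finally have "b f s = b f ((s / real N) [^]\<^bsub>T_grp\<^esub> N)" by simp
    also have "\<dots> = (b f (s / real N)) [^]\<^bsub>T_grp\<^esub> N"
      by (rule group_hom.hom_nat_pow[OF gh1[OF fC] sNI])
    also have "b f (s / real N) = 0" by (rule step3[OF f sNV])
    finally show "b f s = 0" using Tg.nat_pow_one[of N] by simp
  qed
  have step5: "b f s = b g s" if fC: "f \<in> carrier (Cp_Z XX)" and gC: "g \<in> carrier (Cp_Z XX)"
    and fg: "\<And>x. x \<in> F \<Longrightarrow> f x = g x" and s: "s \<in> carrier T_grp" for f g s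
  proof -
    define h where "h = restrict (\<lambda>x. f x + - g x) (topspace XX)"
    have hC: "h \<in> carrier (Cp_Z XX)"
    proof -
      have "restrict (\<lambda>x. f x + restrict (\<lambda>x. - g x) (topspace XX) x) (topspace XX) \<in> carrier (Cp_Z XX)"
        using fC Cp_neg_closed[OF gC] by (rule Cp_mult_closed)
      moreover have "restrict (\<lambda>x. f x + restrict (\<lambda>x. - g x) (topspace XX) x) (topspace XX) = h"
        unfolding h_def by (auto simp: fun_eq_iff restrict_def)
      ultimately show ?thesis by simp
    qed
    have hK: "h \<in> K" unfolding K_def using hC fg F(2) by (auto simp: h_def)
    have "f = g \<otimes>\<^bsub>Cp_Z XX\<^esub> h"
    proof (rule Cp_eqI[OF fC])
      show "g \<otimes>\<^bsub>Cp_Z XX\<^esub> h \<in> carrier (Cp_Z XX)" using gC hC by simp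
      fix x assume "x \<in> topspace XX"
      then show "f x = (g \<otimes>\<^bsub>Cp_Z XX\<^esub> h) x" by (simp add: mult_Cp h_def)
    qed
    then have "b f s = b g s \<otimes>\<^bsub>T_grp\<^esub> b h s" using hom_mult[OF b3[OF s] gC hC] by simp
    also have "b h s = 0" by (rule step4[OF hK s])
    finally show "b f s = b g s" using bI[OF gC s] by (simp add: II_frac)
  qed
  have ex6: "\<exists>E n. openin XX E \<and> closedin XX E \<and> x \<in> E \<and> E \<inter> F \<subseteq> {x} \<and>
      (\<forall>s\<in>carrier T_grp. b (indf XX E) s = frac (of_int n * s))" if x: "x \<in> F" for x
  proof -
    have xS: "x \<in> topspace XX" using x F(2) by blast
    obtain E where E: "openin XX E" "closedin XX E" "x \<in> E" "E \<inter> F \<subseteq> {x}"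
      using sep_clopen[OF H Z xS F(1)] by blast
    have eC: "indf XX E \<in> carrier (Cp_Z XX)" unfolding indf_def using E(1,2) by (rule indicator_Cp)
    obtain n where "\<forall>t\<in>carrier T_grp. b (indf XX E) t = frac (of_int n * t)"
      using char_classify[OF b1[OF eC] b2[OF eC]] by blast
    then show ?thesis using E by blast
  qed
  define Ef where "Ef x = (SOME E. \<exists>n. openin XX E \<and> closedin XX E \<and> x \<in> E \<and> E \<inter> F \<subseteq> {x} \<and>
      (\<forall>s\<in>carrier T_grp. b (indf XX E) s = frac (of_int n * s)))" for x
  have Ef: "\<exists>n. openin XX (Ef x) \<and> closedin XX (Ef x) \<and> x \<in> Ef x \<and> Ef x \<inter> F \<subseteq> {x} \<and>
      (\<forall>s\<in>carrier T_grp. b (indf XX (Ef x)) s = frac (of_int n * s))" if "x \<in> F" for x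
    unfolding Ef_def using someI_ex[OF ex6[OF that]] .
  define nf where "nf x = (SOME n. \<forall>s\<in>carrier T_grp. b (indf XX (Ef x)) s = frac (of_int n * s))" for x
  have Ef1: "openin XX (Ef x)" "closedin XX (Ef x)" "x \<in> Ef x" "Ef x \<inter> F \<subseteq> {x}" if "x \<in> F" for x
    using Ef[OF that] by blast+
  have nf: "\<forall>s\<in>carrier T_grp. b (indf XX (Ef x)) s = frac (of_int (nf x) * s)" if "x \<in> F" for x
  proof -
    have "\<exists>n. \<forall>s\<in>carrier T_grp. b (indf XX (Ef x)) s = frac (of_int n * s)" using Ef[OF that] by blast
    then show ?thesis unfolding nf_def by (rule someI_ex)
  qed
  have eC: "indf XX (Ef x) \<in> carrier (Cp_Z XX)" if "x \<in> F" for x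
    unfolding indf_def using Ef1(1,2)[OF that] by (rule indicator_Cp)
  define a where "a = Abs_poly_mapping (\<lambda>x. if x \<in> F then nf x else 0)"
  have fin: "finite {x. (if x \<in> F then nf x else 0) \<noteq> 0}"
    using F(1) by (rule finite_subset[rotated]) auto
  have la: "Poly_Mapping.lookup a = (\<lambda>x. if x \<in> F then nf x else 0)"
    unfolding a_def using fin by simp
  have ka: "Poly_Mapping.keys a \<subseteq> F" by (auto simp: in_keys_iff la split: if_splits)
  define gG where "gG f G = restrict (\<lambda>y. \<Sum>x\<in>G. f x * indf XX (Ef x) y) (topspace XX)" for f G
  have step8: "gG f G \<in> carrier (Cp_Z XX) \<and> (\<forall>s\<in>carrier T_grp. b (gG f G) s = frac (of_int (\<Sum>x\<in>G. f x * nf x) * s))"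
    if fC: "f \<in> carrier (Cp_Z XX)" and G: "G \<subseteq> F" for f G
  proof -
    have "finite G" using G F(1) finite_subset by blast
    then show ?thesis using G
    proof (induction G rule: finite_subset_induct)
      case empty
      have g0: "gG f {} = \<one>\<^bsub>Cp_Z XX\<^esub>" by (simp add: gG_def one_Cp)
      have "b (\<one>\<^bsub>Cp_Z XX\<^esub>) s = 0" if "s \<in> carrier T_grp" for s
        using group_hom.hom_one[OF gh3[OF that]] by simp
      then show ?case using g0 by simp
    next
      case (insert x G)
      have xF: "x \<in> F" by fact
      have IH1: "gG f G \<in> carrier (Cp_Z XX)" and IH2: "\<forall>s\<in>carrier T_grp. b (gG f G) s = frac (of_int (\<Sum>x\<in>G. f x * nf x) * s)"
        using insert.IH by blast+
      define p where "p = indf XX (Ef x) [^]\<^bsub>Cp_Z XX\<^esub> (f x)"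
      have pC: "p \<in> carrier (Cp_Z XX)" unfolding p_def using eC[OF xF] by simp
      have pr: "p = restrict (\<lambda>y. f x * indf XX (Ef x) y) (topspace XX)"
        unfolding p_def by (rule Cp_pow_int[OF eC[OF xF]])
      have geq: "gG f (insert x G) = p \<otimes>\<^bsub>Cp_Z XX\<^esub> gG f G"
      proof (rule Cp_eqI)
        show "gG f (insert x G) \<in> carrier (Cp_Z XX)"
        proof -
          have "p \<otimes>\<^bsub>Cp_Z XX\<^esub> gG f G \<in> carrier (Cp_Z XX)" using pC IH1 by simp
          moreover have "p \<otimes>\<^bsub>Cp_Z XX\<^esub> gG f G = gG f (insert x G)"
            unfolding mult_Cp pr gG_def using insert.hyps by (auto simp: fun_eq_iff restrict_def)
          ultimately show ?thesis by simp
        qed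
        show "p \<otimes>\<^bsub>Cp_Z XX\<^esub> gG f G \<in> carrier (Cp_Z XX)" using pC IH1 by simp
        fix y assume "y \<in> topspace XX"
        then show "gG f (insert x G) y = (p \<otimes>\<^bsub>Cp_Z XX\<^esub> gG f G) y"
          unfolding mult_Cp pr gG_def using insert.hyps by simp
      qed
      have "\<forall>s\<in>carrier T_grp. b (gG f (insert x G)) s = frac (of_int (\<Sum>x\<in>insert x G. f x * nf x) * s)"
      proof
        fix s assume s: "s \<in> carrier T_grp"
        have "b p s = (b (indf XX (Ef x)) s) [^]\<^bsub>T_grp\<^esub> (f x)"
          unfolding p_def by (rule group_hom.hom_int_pow[OF gh3[OF s] eC[OF xF]])
        also have "\<dots> = frac (of_int (f x) * b (indf XX (Ef x)) s)"
          by (rule T_pow_int[OF bI[OF eC[OF xF] s]])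
        also have "\<dots> = frac (of_int (f x) * frac (of_int (nf x) * s))" using nf[OF xF] s by simp
        also have "\<dots> = frac (of_int (f x) * (of_int (nf x) * s))" by (rule frac_mult_int)
        finally have bp: "b p s = frac (of_int (f x * nf x) * s)" by (simp add: algebra_simps)
        have "b (gG f (insert x G)) s = b p s \<otimes>\<^bsub>T_grp\<^esub> b (gG f G) s"
          unfolding geq by (rule hom_mult[OF b3[OF s] pC IH1])
        also have "\<dots> = frac (frac (of_int (f x * nf x) * s) + frac (of_int (\<Sum>x\<in>G. f x * nf x) * s))"
          using bp IH2 s by simp
        also have "\<dots> = frac (of_int (f x * nf x) * s + of_int (\<Sum>x\<in>G. f x * nf x) * s)" by simp
        also have "\<dots> = frac (of_int (\<Sum>x\<in>insert x G. f x * nf x) * s)"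
          using insert.hyps by (simp add: algebra_simps)
        finally show "b (gG f (insert x G)) s = frac (of_int (\<Sum>x\<in>insert x G. f x * nf x) * s)" .
      qed
      moreover have "gG f (insert x G) \<in> carrier (Cp_Z XX)" using geq pC IH1 by simp
      ultimately show ?case by blast
    qed
  qed
  show ?thesis
  proof (intro exI[of _ a] conjI ballI)
    show "Poly_Mapping.keys a \<subseteq> topspace XX" using ka F(2) by blast
    fix f s assume fC: "f \<in> carrier (Cp_Z XX)" and s: "s \<in> carrier T_grp"
    have gC: "gG f F \<in> carrier (Cp_Z XX)" and gb: "b (gG f F) s = frac (of_int (\<Sum>x\<in>F. f x * nf x) * s)"
      using step8[OF fC order_refl] s by blast+
    have agree: "f y = gG f F y" if y: "y \<in> F" for y
    proof -
      have yS: "y \<in> topspace XX" using y F(2) by blast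
      have "(\<Sum>x\<in>F. f x * indf XX (Ef x) y) = (\<Sum>x\<in>F. if x = y then f x else 0)"
      proof (rule sum.cong[OF refl])
        fix x assume x: "x \<in> F"
        show "f x * indf XX (Ef x) y = (if x = y then f x else 0)"
        proof (cases "x = y")
          case True then show ?thesis using Ef1(3)[OF x] yS by (simp add: indf_def)
        next
          case False
          then have "y \<notin> Ef x" using Ef1(4)[OF x] y by blast
          then show ?thesis using False yS by (simp add: indf_def)
        qed
      qed
      also have "\<dots> = f y" using y F(1) by simp
      finally show ?thesis using yS by (simp add: gG_def)
    qed
    have "b f s = b (gG f F) s" using step5[OF fC gC agree s] by simp
    also have "\<dots> = frac (of_int (\<Sum>x\<in>F. f x * nf x) * s)" by (rule gb)
    also have "(\<Sum>x\<in>F. f x * nf x) = Nf a f"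
    proof -
      have "Nf a f = (\<Sum>x\<in>F. Poly_Mapping.lookup a x * f x)" using F(1) ka by (rule Nf_superset)
      also have "\<dots> = (\<Sum>x\<in>F. f x * nf x)" by (rule sum.cong) (simp_all add: la)
      finally show ?thesis by simp
    qed
    finally show "b f s = bq a f s" by (simp add: bq_def)
  qed
qed

lemma carrier_dual: "chi \<in> carrier (dual_group G \<tau>) \<longleftrightarrow> chi \<in> characters G \<tau> \<and> chi \<in> extensional (carrier G)"
  by (simp add: dual_group_def)
lemma mult_dual: "chi \<otimes>\<^bsub>dual_group G \<tau>\<^esub> psi = restrict (\<lambda>z. frac (chi z + psi z)) (carrier G)"
  by (simp add: dual_group_def)

lemma frac_eq_mult_imp:
  assumes "\<forall>y\<in>carrier T_grp. frac (of_int n * y) = frac (of_int m * y)"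
  shows "n = m"
proof -
  define d where "d = n - m"
  define y where "y = 1 / (real_of_int \<bar>d\<bar> + 2)"
  have y0: "y > 0" by (simp add: y_def)
  have y1: "y < 1" by (simp add: y_def)
  have "frac (of_int n * y) = frac (of_int m * y)" using assms y0 y1 by simp
  then have "of_int n * y = of_int m * y + of_int (floor (of_int n * y) - floor (of_int m * y))"
    by (rule frac_eq_int_diff)
  then have e: "of_int d * y = of_int (floor (of_int n * y) - floor (of_int m * y))"
    by (simp add: d_def algebra_simps)
  have "\<bar>of_int d * y\<bar> < 1"
  proof -
    have "\<bar>of_int d * y\<bar> = real_of_int \<bar>d\<bar> / (real_of_int \<bar>d\<bar> + 2)" by (simp add: y_def abs_mult)
    also have "\<dots> < 1" by simp
    finally show ?thesis .
  qed
  then have "floor (of_int n * y) - floor (of_int m * y) = 0" using e by (intro int_abs_lt1) simp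
  then have "of_int d * y = 0" using e by simp
  then show ?thesis using y0 by (simp add: d_def)
qed

lemma Nf_indf:
  assumes E: "p \<in> E" "E \<inter> (Poly_Mapping.keys a) \<subseteq> {p}" and p: "p \<in> topspace XX"
    and ka: "Poly_Mapping.keys a \<subseteq> topspace XX"
  shows "Nf a (indf XX E) = Poly_Mapping.lookup a p"
proof -
  define F where "F = insert p (Poly_Mapping.keys a)"
  have F: "finite F" by (simp add: F_def)
  have "Nf a (indf XX E) = (\<Sum>x\<in>F. Poly_Mapping.lookup a x * indf XX E x)"
    using F by (intro Nf_superset) (auto simp: F_def)
  also have "\<dots> = (\<Sum>x\<in>F. if x = p then Poly_Mapping.lookup a x else 0)"
  proof (rule sum.cong[OF refl])
    fix x assume x: "x \<in> F"
    show "Poly_Mapping.lookup a x * indf XX E x = (if x = p then Poly_Mapping.lookup a x else 0)"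
    proof (cases "x = p")
      case True then show ?thesis using E p by (simp add: indf_def)
    next
      case False
      then have xk: "x \<in> Poly_Mapping.keys a" using x by (simp add: F_def)
      then have "x \<notin> E" using E(2) False by blast
      moreover have "x \<in> topspace XX" using xk ka by blast
      ultimately show ?thesis using False by (simp add: indf_def)
    qed
  qed
  also have "\<dots> = Poly_Mapping.lookup a p" using F by (simp add: F_def)
  finally show ?thesis .
qed

theorem corollary5p3:
  fixes XX :: "'a topology"
    and P :: "'p monoid" and \<tau>P :: "'p topology"
    and t :: "('a \<Rightarrow> int) \<Rightarrow> real \<Rightarrow> 'p"
  assumes "tychonoff_space XX"
    and "zero_dimensional XX"
    and "in_Q P \<tau>P"
    and "cont_bihom (Cp_Z XX) (Cp_Z_top XX) T_grp T_top P \<tau>P t"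
    and "Q_tensor_universal TYPE('p) (Cp_Z XX) (Cp_Z_top XX) T_grp T_top P \<tau>P t"
    and "Q_tensor_universal TYPE(real) (Cp_Z XX) (Cp_Z_top XX) T_grp T_top P \<tau>P t"
  shows "dual_group P \<tau>P \<cong> free_Abelian_group (topspace XX)"
proof -
  have H: "Hausdorff_space XX" using assms(1) by (simp add: tychonoff_space_def)
  have Z: "zero_dimensional XX" by (rule assms(2))
  have tagP: "top_ab_group P \<tau>P" using assms(3) by (simp add: in_Q_def)
  have cgP: "comm_group P" and tsP: "topspace \<tau>P = carrier P"
    using tagP by (simp_all add: top_ab_group_def)
  interpret Pg: comm_group P by (rule cgP)
  have tb: "cont_bihom (Cp_Z XX) (Cp_Z_top XX) T_grp T_top P \<tau>P t" by (rule assms(4))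
  have t1: "\<And>x. x \<in> carrier (Cp_Z XX) \<Longrightarrow> (\<lambda>y. t x y) \<in> hom T_grp P \<and> continuous_map T_top \<tau>P (\<lambda>y. t x y)"
    and t2: "\<And>y. y \<in> carrier T_grp \<Longrightarrow> (\<lambda>x. t x y) \<in> hom (Cp_Z XX) P \<and> continuous_map (Cp_Z_top XX) \<tau>P (\<lambda>x. t x y)"
    and t3: "\<And>W. openin \<tau>P W \<and> \<one>\<^bsub>P\<^esub> \<in> W \<Longrightarrow>
        (\<exists>U V. openin (Cp_Z_top XX) U \<and> \<one>\<^bsub>Cp_Z XX\<^esub> \<in> U \<and> openin T_top V \<and> \<one>\<^bsub>T_grp\<^esub> \<in> V \<and>
               (\<forall>x\<in>U. \<forall>y\<in>V. t x y \<in> W))"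
  proof -
    have d: "(\<forall>x \<in> carrier (Cp_Z XX). (\<lambda>y. t x y) \<in> hom T_grp P \<and> continuous_map T_top \<tau>P (\<lambda>y. t x y)) \<and>
     (\<forall>y \<in> carrier T_grp. (\<lambda>x. t x y) \<in> hom (Cp_Z XX) P \<and> continuous_map (Cp_Z_top XX) \<tau>P (\<lambda>x. t x y)) \<and>
     (\<forall>W. openin \<tau>P W \<and> \<one>\<^bsub>P\<^esub> \<in> W \<longrightarrow>
        (\<exists>U V. openin (Cp_Z_top XX) U \<and> \<one>\<^bsub>Cp_Z XX\<^esub> \<in> U \<and> openin T_top V \<and> \<one>\<^bsub>T_grp\<^esub> \<in> V \<and>
               (\<forall>x\<in>U. \<forall>y\<in>V. t x y \<in> W)))"
      using tb unfolding cont_bihom_def .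
    show "\<And>x. x \<in> carrier (Cp_Z XX) \<Longrightarrow> (\<lambda>y. t x y) \<in> hom T_grp P \<and> continuous_map T_top \<tau>P (\<lambda>y. t x y)"
      using d by simp
    show "\<And>y. y \<in> carrier T_grp \<Longrightarrow> (\<lambda>x. t x y) \<in> hom (Cp_Z XX) P \<and> continuous_map (Cp_Z_top XX) \<tau>P (\<lambda>x. t x y)"
      using d by simp
    show "\<And>W. openin \<tau>P W \<and> \<one>\<^bsub>P\<^esub> \<in> W \<Longrightarrow>
        (\<exists>U V. openin (Cp_Z_top XX) U \<and> \<one>\<^bsub>Cp_Z XX\<^esub> \<in> U \<and> openin T_top V \<and> \<one>\<^bsub>T_grp\<^esub> \<in> V \<and>
               (\<forall>x\<in>U. \<forall>y\<in>V. t x y \<in> W))"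
      using d by blast
  qed
  have tP: "t x y \<in> carrier P" if "x \<in> carrier (Cp_Z XX)" "y \<in> carrier T_grp" for x y
    using t1[OF that(1)] that(2) by (auto simp: hom_def)
  have UR: "\<And>b. cont_bihom (Cp_Z XX) (Cp_Z_top XX) T_grp T_top T_grp T_top b \<Longrightarrow>
        (\<exists>f. f \<in> hom P T_grp \<and> continuous_map \<tau>P T_top f \<and>
             (\<forall>x\<in>carrier (Cp_Z XX). \<forall>y\<in>carrier T_grp. b x y = f (t x y)) \<and>
             (\<forall>g. g \<in> hom P T_grp \<and> continuous_map \<tau>P T_top g \<and>
                  (\<forall>x\<in>carrier (Cp_Z XX). \<forall>y\<in>carrier T_grp. b x y = g (t x y))
                  \<longrightarrow> (\<forall>z\<in>carrier P. g z = f z)))"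
  proof -
    fix b assume bb: "cont_bihom (Cp_Z XX) (Cp_Z_top XX) T_grp T_top T_grp T_top b"
    have U0: "\<forall>(H::real monoid) \<tau>H b. in_Q H \<tau>H \<and> cont_bihom (Cp_Z XX) (Cp_Z_top XX) T_grp T_top H \<tau>H b \<longrightarrow>
        (\<exists>f. f \<in> hom P H \<and> continuous_map \<tau>P \<tau>H f \<and>
             (\<forall>x\<in>carrier (Cp_Z XX). \<forall>y\<in>carrier T_grp. b x y = f (t x y)) \<and>
             (\<forall>g. g \<in> hom P H \<and> continuous_map \<tau>P \<tau>H g \<and>
                  (\<forall>x\<in>carrier (Cp_Z XX). \<forall>y\<in>carrier T_grp. b x y = g (t x y))
                  \<longrightarrow> (\<forall>z\<in>carrier P. g z = f z)))"
      using assms(6) unfolding Q_tensor_universal_def .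
    have "in_Q T_grp T_top \<and> cont_bihom (Cp_Z XX) (Cp_Z_top XX) T_grp T_top T_grp T_top b"
      using in_Q_T bb by (rule conjI)
    with spec[OF spec[OF spec[OF U0, of T_grp], of T_top], of b]
    show "\<exists>f. f \<in> hom P T_grp \<and> continuous_map \<tau>P T_top f \<and>
             (\<forall>x\<in>carrier (Cp_Z XX). \<forall>y\<in>carrier T_grp. b x y = f (t x y)) \<and>
             (\<forall>g. g \<in> hom P T_grp \<and> continuous_map \<tau>P T_top g \<and>
                  (\<forall>x\<in>carrier (Cp_Z XX). \<forall>y\<in>carrier T_grp. b x y = g (t x y))
                  \<longrightarrow> (\<forall>z\<in>carrier P. g z = f z))" by (rule mp)
  qed
  define Fa where "Fa a = (SOME f. f \<in> hom P T_grp \<and> continuous_map \<tau>P T_top f \<and>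
             (\<forall>x\<in>carrier (Cp_Z XX). \<forall>y\<in>carrier T_grp. bq a x y = f (t x y)))" for a
  have E1: "Fa a \<in> hom P T_grp \<and> continuous_map \<tau>P T_top (Fa a) \<and>
             (\<forall>x\<in>carrier (Cp_Z XX). \<forall>y\<in>carrier T_grp. bq a x y = Fa a (t x y))"
    if ka: "Poly_Mapping.keys a \<subseteq> topspace XX" for a
  proof -
    have "\<exists>f. f \<in> hom P T_grp \<and> continuous_map \<tau>P T_top f \<and>
             (\<forall>x\<in>carrier (Cp_Z XX). \<forall>y\<in>carrier T_grp. bq a x y = f (t x y))"
      using UR[OF bq_bihom[OF ka]] by blast
    then show ?thesis unfolding Fa_def by (rule someI_ex)
  qed
  have E2: "\<forall>z\<in>carrier P. g z = Fa a z"
    if ka: "Poly_Mapping.keys a \<subseteq> topspace XX" and g: "g \<in> hom P T_grp" "continuous_map \<tau>P T_top g"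
      "\<forall>x\<in>carrier (Cp_Z XX). \<forall>y\<in>carrier T_grp. bq a x y = g (t x y)" for a g
  proof -
    obtain f where f: "f \<in> hom P T_grp" "continuous_map \<tau>P T_top f"
             "\<forall>x\<in>carrier (Cp_Z XX). \<forall>y\<in>carrier T_grp. bq a x y = f (t x y)"
             "\<forall>g. g \<in> hom P T_grp \<and> continuous_map \<tau>P T_top g \<and>
                  (\<forall>x\<in>carrier (Cp_Z XX). \<forall>y\<in>carrier T_grp. bq a x y = g (t x y))
                  \<longrightarrow> (\<forall>z\<in>carrier P. g z = f z)"
      using UR[OF bq_bihom[OF ka]] by blast
    have "\<forall>z\<in>carrier P. g z = f z" using f(4) g by blast
    moreover have "\<forall>z\<in>carrier P. Fa a z = f z" using f(4) E1[OF ka] by blast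
    ultimately show ?thesis by simp
  qed
  define Psi where "Psi a = restrict (Fa a) (carrier P)" for a
  have hom_restr: "restrict h (carrier P) \<in> hom P T_grp" if "h \<in> hom P T_grp" for h
  proof (rule homI)
    fix x y assume "x \<in> carrier P" "y \<in> carrier P"
    then show "restrict h (carrier P) (x \<otimes>\<^bsub>P\<^esub> y) = restrict h (carrier P) x \<otimes>\<^bsub>T_grp\<^esub> restrict h (carrier P) y"
      using hom_mult[OF that] by simp
  next
    fix x assume "x \<in> carrier P"
    then show "restrict h (carrier P) x \<in> carrier T_grp" using that by (auto simp: hom_def)
  qed
  have Psi_in: "Psi a \<in> carrier (dual_group P \<tau>P)" if ka: "Poly_Mapping.keys a \<subseteq> topspace XX" for a
  proof -
    have "Psi a \<in> hom P T_grp" unfolding Psi_def using E1[OF ka] hom_restr by blast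
    moreover have "continuous_map \<tau>P T_top (Psi a)"
    proof (rule continuous_map_eq[of _ _ "Fa a"])
      show "continuous_map \<tau>P T_top (Fa a)" using E1[OF ka] by blast
      fix x assume "x \<in> topspace \<tau>P"
      then show "Fa a x = Psi a x" by (simp add: Psi_def tsP)
    qed
    ultimately show ?thesis unfolding carrier_dual characters_def Psi_def by simp
  qed
  have iso: "Psi \<in> iso (free_Abelian_group (topspace XX)) (dual_group P \<tau>P)"
    unfolding iso_iff
  proof (intro conjI)
    show "Psi \<in> hom (free_Abelian_group (topspace XX)) (dual_group P \<tau>P)"
    proof (rule homI)
      fix a assume "a \<in> carrier (free_Abelian_group (topspace XX))"
      then show "Psi a \<in> carrier (dual_group P \<tau>P)" using Psi_in by simp
    next
      fix a a' assume a: "a \<in> carrier (free_Abelian_group (topspace XX))"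
        and a': "a' \<in> carrier (free_Abelian_group (topspace XX))"
      have ka: "Poly_Mapping.keys a \<subseteq> topspace XX" and ka': "Poly_Mapping.keys a' \<subseteq> topspace XX"
        using a a' by simp_all
      have kaa: "Poly_Mapping.keys (a + a') \<subseteq> topspace XX" using keys_add[of a a'] ka ka' by blast
      define g where "g z = frac (Fa a z + Fa a' z)" for z
      have f1: "Fa a \<in> hom P T_grp" "continuous_map \<tau>P T_top (Fa a)"
        "\<forall>x\<in>carrier (Cp_Z XX). \<forall>y\<in>carrier T_grp. bq a x y = Fa a (t x y)" using E1[OF ka] by blast+
      have f2: "Fa a' \<in> hom P T_grp" "continuous_map \<tau>P T_top (Fa a')"
        "\<forall>x\<in>carrier (Cp_Z XX). \<forall>y\<in>carrier T_grp. bq a' x y = Fa a' (t x y)" using E1[OF ka'] by blast+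
      have gh: "g \<in> hom P T_grp"
      proof (rule homI)
        fix x assume "x \<in> carrier P" then show "g x \<in> carrier T_grp" by (simp add: g_def frac_lt_1)
      next
        fix x y assume x: "x \<in> carrier P" and y: "y \<in> carrier P"
        have "g (x \<otimes>\<^bsub>P\<^esub> y) = frac (frac (Fa a x + Fa a y) + frac (Fa a' x + Fa a' y))"
          unfolding g_def using hom_mult[OF f1(1) x y] hom_mult[OF f2(1) x y] by simp
        also have "\<dots> = frac ((Fa a x + Fa a y) + (Fa a' x + Fa a' y))" by (rule frac_frac_add)
        also have "\<dots> = frac ((Fa a x + Fa a' x) + (Fa a y + Fa a' y))"
          by (rule arg_cong[where f=frac]) (simp add: algebra_simps)
        also have "\<dots> = frac (frac (Fa a x + Fa a' x) + frac (Fa a y + Fa a' y))" by (rule frac_frac_add[symmetric])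
        also have "\<dots> = g x \<otimes>\<^bsub>T_grp\<^esub> g y" by (simp only: mult_T_grp g_def)
        finally show "g (x \<otimes>\<^bsub>P\<^esub> y) = g x \<otimes>\<^bsub>T_grp\<^esub> g y" .
      qed
      have gc: "continuous_map \<tau>P T_top g"
      proof -
        have "continuous_map \<tau>P (prod_topology T_top T_top) (\<lambda>z. (Fa a z, Fa a' z))"
          using f1(2) f2(2) by (rule continuous_map_pairedI)
        then have "continuous_map \<tau>P T_top ((\<lambda>(u,v). frac (u + v)) \<circ> (\<lambda>z. (Fa a z, Fa a' z)))"
          using cont_T_add by (rule continuous_map_compose)
        moreover have "g = (\<lambda>z. frac (Fa a z + Fa a' z))" by (simp add: fun_eq_iff g_def)
        ultimately show ?thesis by (simp add: o_def)
      qed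
      have gf: "\<forall>x\<in>carrier (Cp_Z XX). \<forall>y\<in>carrier T_grp. bq (a + a') x y = g (t x y)"
      proof (intro ballI)
        fix x y assume x: "x \<in> carrier (Cp_Z XX)" and y: "y \<in> carrier T_grp"
        have "bq (a + a') x y = frac (of_int (Nf a x) * y + of_int (Nf a' x) * y)"
          by (simp add: bq_def Nf_add algebra_simps)
        also have "\<dots> = frac (bq a x y + bq a' x y)" by (simp add: bq_def)
        also have "\<dots> = g (t x y)" using f1(3) f2(3) x y by (simp add: g_def)
        finally show "bq (a + a') x y = g (t x y)" .
      qed
      have eq: "\<forall>z\<in>carrier P. g z = Fa (a + a') z" using E2[OF kaa gh gc gf] .
      show "Psi (a \<otimes>\<^bsub>free_Abelian_group (topspace XX)\<^esub> a') = Psi a \<otimes>\<^bsub>dual_group P \<tau>P\<^esub> Psi a'"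
        unfolding mult_free_Abelian_group mult_dual Psi_def
      proof (rule restrict_ext)
        fix z assume "z \<in> carrier P"
        then show "Fa (a + a') z = frac (restrict (Fa a) (carrier P) z + restrict (Fa a') (carrier P) z)"
          using eq by (simp add: g_def)
      qed
    qed
  next
    show "inj_on Psi (carrier (free_Abelian_group (topspace XX)))"
    proof (rule inj_onI)
      fix a a' assume a: "a \<in> carrier (free_Abelian_group (topspace XX))"
        and a': "a' \<in> carrier (free_Abelian_group (topspace XX))" and eq: "Psi a = Psi a'"
      have ka: "Poly_Mapping.keys a \<subseteq> topspace XX" and ka': "Poly_Mapping.keys a' \<subseteq> topspace XX"
        using a a' by simp_all
      have bqeq: "bq a x y = bq a' x y" if x: "x \<in> carrier (Cp_Z XX)" and y: "y \<in> carrier T_grp" for x y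
      proof -
        have e1: "\<forall>x\<in>carrier (Cp_Z XX). \<forall>y\<in>carrier T_grp. bq a x y = Fa a (t x y)" using E1[OF ka] by blast
        have e2: "\<forall>x\<in>carrier (Cp_Z XX). \<forall>y\<in>carrier T_grp. bq a' x y = Fa a' (t x y)" using E1[OF ka'] by blast
        have "bq a x y = Fa a (t x y)" using bspec[OF bspec[OF e1 x] y] .
        also have "\<dots> = Psi a (t x y)" using tP[OF x y] by (simp add: Psi_def)
        also have "\<dots> = Psi a' (t x y)" by (simp add: eq)
        also have "\<dots> = Fa a' (t x y)" using tP[OF x y] by (simp add: Psi_def)
        also have "\<dots> = bq a' x y" using bspec[OF bspec[OF e2 x] y] by simp
        finally show ?thesis .
      qed
      have Neq: "Nf a x = Nf a' x" if x: "x \<in> carrier (Cp_Z XX)" for x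
        using bqeq[OF x] by (intro frac_eq_mult_imp) (simp add: bq_def)
      show "a = a'"
      proof (rule poly_mapping_eqI)
        fix p
        show "Poly_Mapping.lookup a p = Poly_Mapping.lookup a' p"
        proof (cases "p \<in> topspace XX")
          case False
          then have "p \<notin> Poly_Mapping.keys a" "p \<notin> Poly_Mapping.keys a'" using ka ka' by blast+
          then show ?thesis by (simp add: in_keys_iff)
        next
          case True
          have fin: "finite (Poly_Mapping.keys a \<union> Poly_Mapping.keys a')" by simp
          obtain E where E: "openin XX E" "closedin XX E" "p \<in> E"
            "E \<inter> (Poly_Mapping.keys a \<union> Poly_Mapping.keys a') \<subseteq> {p}"
            using sep_clopen[OF H Z True fin] by blast
          have eC: "indf XX E \<in> carrier (Cp_Z XX)" unfolding indf_def using E(1,2) by (rule indicator_Cp)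
          have "Poly_Mapping.lookup a p = Nf a (indf XX E)"
            using E(3,4) True ka by (intro Nf_indf[symmetric]) blast+
          also have "\<dots> = Nf a' (indf XX E)" by (rule Neq[OF eC])
          also have "\<dots> = Poly_Mapping.lookup a' p"
            using E(3,4) True ka' by (intro Nf_indf) blast+
          finally show ?thesis .
        qed
      qed
    qed
  next
    show "Psi ` carrier (free_Abelian_group (topspace XX)) = carrier (dual_group P \<tau>P)"
    proof
      show "Psi ` carrier (free_Abelian_group (topspace XX)) \<subseteq> carrier (dual_group P \<tau>P)"
        using Psi_in by auto
      show "carrier (dual_group P \<tau>P) \<subseteq> Psi ` carrier (free_Abelian_group (topspace XX))"
      proof
        fix chi assume chi: "chi \<in> carrier (dual_group P \<tau>P)"
        have ch: "chi \<in> hom P T_grp" "continuous_map \<tau>P T_top chi" "chi \<in> extensional (carrier P)"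
          using chi unfolding carrier_dual characters_def by simp_all
        define b where "b x y = chi (t x y)" for x y
        have bb: "cont_bihom (Cp_Z XX) (Cp_Z_top XX) T_grp T_top T_grp T_top b"
          unfolding cont_bihom_def
        proof (intro conjI ballI allI impI)
          fix x assume x: "x \<in> carrier (Cp_Z XX)"
          show "(\<lambda>y. b x y) \<in> hom T_grp T_grp"
          proof (rule homI)
            fix y assume "y \<in> carrier T_grp"
            then show "b x y \<in> carrier T_grp" using tP[OF x] ch(1) by (auto simp: b_def hom_def)
          next
            fix y y' assume y: "y \<in> carrier T_grp" and y': "y' \<in> carrier T_grp"
            show "b x (y \<otimes>\<^bsub>T_grp\<^esub> y') = b x y \<otimes>\<^bsub>T_grp\<^esub> b x y'"
              unfolding b_def using hom_mult[OF conjunct1[OF t1[OF x]] y y'] hom_mult[OF ch(1) tP[OF x y] tP[OF x y']]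
              by simp
          qed
          show "continuous_map T_top T_top (\<lambda>y. b x y)"
            unfolding b_def using conjunct2[OF t1[OF x]] ch(2) by (rule continuous_map_compose[unfolded o_def])
        next
          fix y assume y: "y \<in> carrier T_grp"
          show "(\<lambda>x. b x y) \<in> hom (Cp_Z XX) T_grp"
          proof (rule homI)
            fix x assume "x \<in> carrier (Cp_Z XX)"
            then show "b x y \<in> carrier T_grp" using tP[OF _ y] ch(1) by (auto simp: b_def hom_def)
          next
            fix x x' assume x: "x \<in> carrier (Cp_Z XX)" and x': "x' \<in> carrier (Cp_Z XX)"
            show "b (x \<otimes>\<^bsub>Cp_Z XX\<^esub> x') y = b x y \<otimes>\<^bsub>T_grp\<^esub> b x' y"
              unfolding b_def using hom_mult[OF conjunct1[OF t2[OF y]] x x'] hom_mult[OF ch(1) tP[OF x y] tP[OF x' y]]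
              by simp
          qed
          show "continuous_map (Cp_Z_top XX) T_top (\<lambda>x. b x y)"
            unfolding b_def using conjunct2[OF t2[OF y]] ch(2) by (rule continuous_map_compose[unfolded o_def])
        next
          fix W assume W: "openin T_top W \<and> \<one>\<^bsub>T_grp\<^esub> \<in> W"
          define W' where "W' = {z \<in> topspace \<tau>P. chi z \<in> W}"
          have W'o: "openin \<tau>P W'" unfolding W'_def using ch(2) conjunct1[OF W] by (rule openin_continuous_map_preimage)
          have chi1: "chi \<one>\<^bsub>P\<^esub> = \<one>\<^bsub>T_grp\<^esub>"
            using group_hom.hom_one[of P T_grp chi] ch(1) Pg.is_group Tg.is_group
            unfolding group_hom_def group_hom_axioms_def by simp
          have "\<one>\<^bsub>P\<^esub> \<in> W'" unfolding W'_def using chi1 W tsP by simp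
          then obtain U V where UV: "openin (Cp_Z_top XX) U" "\<one>\<^bsub>Cp_Z XX\<^esub> \<in> U" "openin T_top V" "\<one>\<^bsub>T_grp\<^esub> \<in> V"
               "\<forall>x\<in>U. \<forall>y\<in>V. t x y \<in> W'"
            using t3[of W'] W'o by blast
          have "\<forall>x\<in>U. \<forall>y\<in>V. b x y \<in> W"
          proof (intro ballI)
            fix x y assume "x \<in> U" "y \<in> V"
            then have "t x y \<in> W'" using UV(5) by blast
            then show "b x y \<in> W" by (simp add: W'_def b_def)
          qed
          then show "\<exists>U V. openin (Cp_Z_top XX) U \<and> \<one>\<^bsub>Cp_Z XX\<^esub> \<in> U \<and> openin T_top V \<and> \<one>\<^bsub>T_grp\<^esub> \<in> V \<and>
               (\<forall>x\<in>U. \<forall>y\<in>V. b x y \<in> W)"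
            using UV(1-4) by blast
        qed
        obtain a where ka: "Poly_Mapping.keys a \<subseteq> topspace XX"
          and ab: "\<forall>f\<in>carrier (Cp_Z XX). \<forall>s\<in>carrier T_grp. b f s = bq a f s"
          using bihom_classify[OF H Z bb] by blast
        have "\<forall>x\<in>carrier (Cp_Z XX). \<forall>y\<in>carrier T_grp. bq a x y = chi (t x y)"
          using ab by (simp add: b_def)
        then have "\<forall>z\<in>carrier P. chi z = Fa a z" using E2[OF ka ch(1) ch(2)] by blast
        then have "chi = Psi a" unfolding Psi_def using ch(3)
          by (intro extensionalityI[OF ch(3)]) simp_all
        moreover have "a \<in> carrier (free_Abelian_group (topspace XX))" using ka by simp
        ultimately show "chi \<in> Psi ` carrier (free_Abelian_group (topspace XX))" by blast
      qed
    qed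
  qed
  then have "free_Abelian_group (topspace XX) \<cong> dual_group P \<tau>P" unfolding is_iso_def by blast
  then show ?thesis by (rule group.iso_sym[OF group_free_Abelian_group])
qed

end
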